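(* Let $\mathcal X,\mathcal Y$ be Polish spaces, $c:\mathcal X\times\mathcal Y\to\mathbb R$ measurable with $|c|\le 1$, and $\varepsilon>0$. Then for all $\mu,\tilde\mu\in\mathcal P(\mathcal X)$ and $\nu,\tilde\nu\in\mathcal P(\mathcal Y)$, \[ |\mathrm{OT}_{c,\varepsilon}(\tilde\mu,\tilde\nu)-\mathrm{OT}_{c,\varepsilon}(\mu,\nu)|\le 2\sup_{\phi\in\mathcal F_{c,\varepsilon}}\Big|\int_{\mathcal X}\phi\,d(\tilde\mu-\mu)\Big|+2\sup_{\phi\in\mathcal F_{c,\varepsilon}}\Big|\int_{\mathcal Y}\phi^{(c,\varepsilon)}_{\tilde\mu}\,d(\tilde\nu-\nu)\Big|. \]
   Context: $\mathcal P(\cdot)$ denotes Borel probability measures. $\mathrm{OT}_{c,\varepsilon}(\mu,\nu)=\inf_{\pi\in\Pi(\mu,\nu)}\int c\,d\pi+\varepsilon\,\mathrm{KL}(\pi\mid\mu\otimes\nu)$, with $\Pi(\mu,\nu)$ the couplings of $\mu,\nu$ and $\mathrm{KL}(\pi\mid\rho)=\int\log(d\pi/d\rho)\,d\pi$ if $\pi\ll\rho$, $+\infty$ otherwise. $\exp_\varepsilon(t)=\exp(t/\varepsilon)$. For $\xi\in\mathcal P(\mathcal Y)$ and measurable $\psi$ on $\mathcal Y$: $\psi^{(c,\varepsilon)}_\xi(x)=-\varepsilon\log\int\exp_\varepsilon(\psi(y)-c(x,y))\,d\xi(y)$; for $\tilde\mu\in\mathcal P(\mathcal X)$ and measurable $\phi$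 on $\mathcal X$: $\phi^{(c,\varepsilon)}_{\tilde\mu}(y)=-\varepsilon\log\int\exp_\varepsilon(\phi(x)-c(x,y))\,d\tilde\mu(x)$. $\mathcal F_{c,\varepsilon}=\bigcup_{\xi\in\mathcal P(\mathcal Y)}\{\phi:\mathcal X\to\mathbb R\mid\exists\,\psi:\mathcal Y\to\mathbb R\text{ measurable},\ \phi=\psi^{(c,\varepsilon)}_\xi,\ \|\phi\|_\infty,\|\psi\|_\infty\le 3/2\}$. *)

theory Defs
  imports "HOL-Probability.Probability"
begin

definition borel_prob :: "'a::topological_space measure \<Rightarrow> bool" where
  "borel_prob M \<longleftrightarrow> prob_space M \<and> sets M = sets (borel :: 'a measure)"

definition couplings :: "'a::topological_space measure \<Rightarrow> 'b::topological_space measure \<Rightarrow> ('a \<times> 'b) measure set" where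
  "couplings \<mu> \<nu> = {\<pi>. prob_space \<pi> \<and> sets \<pi> = sets (\<mu> \<Otimes>\<^sub>M \<nu>)
      \<and> distr \<pi> \<mu> fst = \<mu> \<and> distr \<pi> \<nu> snd = \<nu>}"

text \<open>Kullback-Leibler divergence KL(pi | rho) = int log (d pi / d rho) d pi if pi << rho,
  +infinity otherwise.  (The negative part of the log-density is always pi-integrable,
  so a non-integrable log-density means the integral is +infinity.)\<close>
definition KL :: "'a measure \<Rightarrow> 'a measure \<Rightarrow> ereal" where
  "KL \<pi> \<rho> =
     (if sets \<pi> = sets \<rho> \<and> absolutely_continuous \<rho> \<pi> then
        (if integrable \<pi> (\<lambda>z. ln (enn2real (RN_deriv \<rho> \<pi> z)))
         then ereal (\<integral>z. ln (enn2real (RN_deriv \<rho> \<pi> z)) \<partial>\<pi>)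
         else \<infinity>)
      else \<infinity>)"

definition OT :: "('a::topological_space \<Rightarrow> 'b::topological_space \<Rightarrow> real) \<Rightarrow> real
     \<Rightarrow> 'a measure \<Rightarrow> 'b measure \<Rightarrow> ereal" where
  "OT c \<epsilon> \<mu> \<nu> =
     (INF \<pi>\<in>couplings \<mu> \<nu>. ereal (\<integral>z. c (fst z) (snd z) \<partial>\<pi>) + ereal \<epsilon> * KL \<pi> (\<mu> \<Otimes>\<^sub>M \<nu>))"

definition ctransX :: "('a \<Rightarrow> 'b \<Rightarrow> real) \<Rightarrow> real \<Rightarrow> 'b measure \<Rightarrow> ('b \<Rightarrow> real) \<Rightarrow> 'a \<Rightarrow> real" where
  "ctransX c \<epsilon> \<xi> \<psi> x = - \<epsilon> * ln (\<integral>y. exp ((\<psi> y - c x y) / \<epsilon>) \<partial>\<xi>)"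

definition ctransY :: "('a \<Rightarrow> 'b \<Rightarrow> real) \<Rightarrow> real \<Rightarrow> 'a measure \<Rightarrow> ('a \<Rightarrow> real) \<Rightarrow> 'b \<Rightarrow> real" where
  "ctransY c \<epsilon> \<mu> \<phi> y = - \<epsilon> * ln (\<integral>x. exp ((\<phi> x - c x y) / \<epsilon>) \<partial>\<mu>)"

definition Fce :: "('a::topological_space \<Rightarrow> 'b::topological_space \<Rightarrow> real) \<Rightarrow> real \<Rightarrow> ('a \<Rightarrow> real) set" where
  "Fce c \<epsilon> = {\<phi>. \<exists>\<xi> :: 'b measure. \<exists>\<psi>. borel_prob \<xi> \<and> \<psi> \<in> borel_measurable borel
       \<and> \<phi> = ctransX c \<epsilon> \<xi> \<psi>
       \<and> (\<forall>x. \<bar>\<phi> x\<bar> \<le> 3/2) \<and> (\<forall>y. \<bar>\<psi> y\<bar> \<le> 3/2)}"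

end

theory Submission
  imports Defs
begin

definition bmf :: "('y::topological_space \<Rightarrow> real) \<Rightarrow> real \<Rightarrow> real \<Rightarrow> bool" where
  "bmf \<psi> lo hi \<longleftrightarrow> \<psi> \<in> borel_measurable borel \<and> (\<forall>y. lo \<le> \<psi> y \<and> \<psi> y \<le> hi)"

lemma bp_prob: "borel_prob \<nu> \<Longrightarrow> prob_space \<nu>" by (simp add: borel_prob_def)
lemma bp_sets: "borel_prob \<nu> \<Longrightarrow> sets \<nu> = sets borel" by (simp add: borel_prob_def)
lemma log_contr:
  fixes \<theta> r R :: real
  assumes th: "0 < \<theta>" "\<theta> < 1" and r: "1 \<le> r" "r \<le> R"
  shows "ln (\<theta> + (1-\<theta>)*r) \<le> ((1-\<theta>)*R/(\<theta>+(1-\<theta>)*R)) * ln r"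
proof -
  define k where "k = (1-\<theta>)*R/(\<theta>+(1-\<theta>)*R)"
  define f where "f t = k * ln t - ln (\<theta> + (1-\<theta>)*t)" for t
  have pos: "\<theta> + (1-\<theta>)*t > 0" if "t \<ge> 1" for t using th that
    by (smt (verit, best) mult_le_cancel_left1)
  have der: "DERIV f t :> k / t - (1-\<theta>)/(\<theta> + (1-\<theta>)*t)" if "t \<ge> 1" for t
    unfolding f_def using pos[OF that] that
    by (auto intro!: derivative_eq_intros simp: field_simps)
  have "f 1 \<le> f r"
  proof (rule DERIV_nonneg_imp_increasing_open[OF r(1)])
    fix t assume t: "1 < t" "t < r"
    have Rp: "\<theta>+(1-\<theta>)*R > 0" using pos r by auto
    have "(1-\<theta>)/(\<theta> + (1-\<theta>)*t) \<le> k / t"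
    proof -
      have "(1-\<theta>) * t * (\<theta>+(1-\<theta>)*R) \<le> (1-\<theta>)*R * (\<theta> + (1-\<theta>)*t)"
      proof -
        have "0 \<le> \<theta>*(1-\<theta>)*(R-t)" using t r th by simp
        then show ?thesis by (simp add: algebra_simps)
      qed
      then show ?thesis unfolding k_def using pos[of t] t Rp
        by (simp add: divide_simps mult.commute mult.left_commute)
    qed
    then show "\<exists>y. DERIV f t :> y \<and> 0 \<le> y" using der[of t] t by auto
  next
    show "continuous_on {1..r} f"
      by (rule DERIV_continuous_on) (use der in \<open>auto intro: has_field_derivative_at_within\<close>)
  qed
  then show ?thesis unfolding f_def k_def by simp
qed

lemma contr_real:
  fixes \<theta> a b A R :: real
  assumes th: "0 < \<theta>" "\<theta> < 1" and a: "0 < a" "a \<le> A" "a \<le> b" "b \<le> R * a"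
  shows "ln (\<theta>*A + (1-\<theta>)*b) - ln (\<theta>*A + (1-\<theta>)*a) \<le> ((1-\<theta>)*R/(\<theta>+(1-\<theta>)*R)) * (ln b - ln a)"
proof -
  have Ap: "A > 0" using a by auto
  have Yp: "\<theta>*A + (1-\<theta>)*a > 0" using th a Ap by (smt (verit) mult_pos_pos)
  have Xp: "\<theta>*A + (1-\<theta>)*b > 0" using th a Ap by (smt (verit) mult_pos_pos)
  have r1: "1 \<le> b / a" using a by simp
  have rR: "b / a \<le> R" using a by (simp add: divide_le_eq)
  have e: "(\<theta> + (1-\<theta>)*(b/a)) * a = \<theta>*a + (1-\<theta>)*b" using a by (simp add: field_simps)
  have "(\<theta>*A + (1-\<theta>)*b) * a \<le> (\<theta> + (1-\<theta>)*(b/a)) * a * (\<theta>*A + (1-\<theta>)*a)"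
  proof -
    have "0 \<le> \<theta>*(1-\<theta>)*(A-a)*(b-a)" using th a by simp
    then show ?thesis unfolding e by (simp add: algebra_simps)
  qed
  then have "(\<theta>*A + (1-\<theta>)*b) / (\<theta>*A + (1-\<theta>)*a) \<le> \<theta> + (1-\<theta>)*(b/a)"
    using Yp a by (simp add: divide_le_eq mult.commute mult.left_commute)
  then have "ln ((\<theta>*A + (1-\<theta>)*b) / (\<theta>*A + (1-\<theta>)*a)) \<le> ln (\<theta> + (1-\<theta>)*(b/a))"
  proof -
    have "0 \<le> (1-\<theta>)*(b/a)" using th a by simp
    then have "0 < \<theta> + (1-\<theta>)*(b/a)" using th by linarith
    then show ?thesis using Xp Yp \<open>_ \<le> \<theta> + (1-\<theta>)*(b/a)\<close> by (subst ln_le_cancel_iff) auto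
  qed
  also have "\<dots> \<le> ((1-\<theta>)*R/(\<theta>+(1-\<theta>)*R)) * ln (b/a)" by (rule log_contr[OF th r1 rR])
  finally show ?thesis using Xp Yp a by (simp add: ln_div)
qed

lemma geom_conv:
  fixes f :: "nat \<Rightarrow> real"
  assumes k: "0 \<le> \<kappa>" "\<kappa> < 1" and d: "\<And>n. \<bar>f (Suc n) - f n\<bar> \<le> C * \<kappa>^n"
  shows "\<exists>L. f \<longlonglongrightarrow> L \<and> (\<forall>n. \<bar>f n - L\<bar> \<le> C * \<kappa>^n / (1-\<kappa>))"
proof -
  define d where "d n = f (Suc n) - f n" for n
  have sg: "summable (\<lambda>n. C * \<kappa>^n)" using k by (intro summable_mult summable_geometric) simp
  have sd: "summable (\<lambda>n. \<bar>d n\<bar>)"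
    by (rule summable_comparison_test[OF _ sg]) (use d in \<open>auto simp: d_def\<close>)
  then have sd': "summable d" by (rule summable_rabs_cancel)
  define L where "L = f 0 + suminf d"
  have fn: "f n = f 0 + (\<Sum>i<n. d i)" for n unfolding d_def by (simp add: sum_lessThan_telescope)
  have "(\<lambda>n. f 0 + (\<Sum>i<n. d i)) \<longlonglongrightarrow> L" unfolding L_def
    by (intro tendsto_add tendsto_const summable_LIMSEQ[OF sd'])
  moreover have "(\<lambda>n. f 0 + (\<Sum>i<n. d i)) = f" by (rule ext, rule fn[symmetric])
  ultimately have lim: "f \<longlonglongrightarrow> L" by simp
  have bnd: "\<bar>f n - L\<bar> \<le> C * \<kappa>^n / (1-\<kappa>)" for n
  proof -
    have "L - f n = (\<Sum>k. d (k + n))" unfolding L_def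
      using suminf_split_initial_segment[OF sd', of n] fn[of n] by simp
    moreover have "\<bar>\<Sum>k. d (k + n)\<bar> \<le> (\<Sum>k. \<bar>d (k + n)\<bar>)"
      by (rule summable_rabs) (use sd summable_iff_shift[of "\<lambda>k. \<bar>d k\<bar>" n] in simp)
    moreover have "(\<Sum>k. \<bar>d (k + n)\<bar>) \<le> (\<Sum>k. C * \<kappa>^n * \<kappa>^k)"
    proof (rule suminf_le)
      show "summable (\<lambda>k. \<bar>d (k + n)\<bar>)" using sd summable_iff_shift[of "\<lambda>k. \<bar>d k\<bar>" n] by simp
      show "summable (\<lambda>k. C * \<kappa>^n * \<kappa>^k)" using k by (intro summable_mult summable_geometric) simp
      fix k show "\<bar>d (k + n)\<bar> \<le> C * \<kappa>^n * \<kappa>^k" using d[of "k+n"] unfolding d_def by (simp add: power_add algebra_simps)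
    qed
    moreover have "(\<Sum>k. C * \<kappa>^n * \<kappa>^k) = C * \<kappa>^n / (1-\<kappa>)"
      using k by (simp add: suminf_mult suminf_geometric summable_geometric)
    ultimately show ?thesis by linarith
  qed
  show ?thesis using lim bnd by blast
qed


lemma ctransY_swap: "ctransY c \<epsilon> \<mu> \<phi> = ctransX (\<lambda>y x. c x y) \<epsilon> \<mu> \<phi>"
  by (simp add: ctransX_def ctransY_def fun_eq_iff)

locale kern =
  fixes c :: "'x::topological_space \<Rightarrow> 'y::topological_space \<Rightarrow> real" and \<epsilon> :: real
  assumes cm: "(\<lambda>z. c (fst z) (snd z)) \<in> borel_measurable (borel \<Otimes>\<^sub>M borel)"
    and cb: "\<And>x y. \<bar>c x y\<bar> \<le> 1"
    and eps: "\<epsilon> > 0"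
begin

lemma meas_transfer: "sets \<nu> = sets borel \<Longrightarrow> borel_measurable \<nu> = borel_measurable borel"
  by (rule measurable_cong_sets) auto

lemma c_meas2: "(\<lambda>y. c x y) \<in> borel_measurable borel"
  using measurable_Pair2[OF cm, of x] by simp

lemma c_meas1: "(\<lambda>x. c x y) \<in> borel_measurable borel"
  using measurable_Pair1[OF cm, of y] by simp

lemma c_meas_nu:
  assumes "sets \<nu> = sets borel"
  shows "(\<lambda>z. c (fst z) (snd z)) \<in> borel_measurable (borel \<Otimes>\<^sub>M \<nu>)"
  using cm by (simp add: measurable_cong_sets[OF sets_pair_measure_cong[OF refl assms] refl])

lemma integrand_meas:
  assumes "sets \<nu> = sets borel" "\<psi> \<in> borel_measurable borel"
  shows "(\<lambda>y. exp ((\<psi> y - c x y) / \<epsilon>)) \<in> borel_measurable \<nu>"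
proof -
  have [measurable]: "(\<lambda>y. c x y) \<in> borel_measurable borel" by (rule c_meas2)
  have "(\<lambda>y. exp ((\<psi> y - c x y) / \<epsilon>)) \<in> borel_measurable borel" using assms(2) by measurable
  then show ?thesis unfolding meas_transfer[OF assms(1)] .
qed

lemma integrand_int:
  assumes "borel_prob \<nu>" "\<psi> \<in> borel_measurable borel" "\<And>y. \<bar>\<psi> y\<bar> \<le> B"
  shows "integrable \<nu> (\<lambda>y. exp ((\<psi> y - c x y) / \<epsilon>))"
proof -
  interpret prob_space \<nu> using assms(1) by (simp add: borel_prob_def)
  have s: "sets \<nu> = sets borel" using assms(1) by (simp add: borel_prob_def)
  show ?thesis
  proof (rule integrable_const_bound[where B="exp ((B + 1)/\<epsilon>)"])
    show "AE y in \<nu>. norm (exp ((\<psi> y - c x y) / \<epsilon>)) \<le> exp ((B + 1)/\<epsilon>)"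
    proof (intro AE_I2)
      fix y
      have "\<psi> y - c x y \<le> B + 1" using assms(3)[of y] cb[of x y] by auto
      then have "(\<psi> y - c x y)/\<epsilon> \<le> (B+1)/\<epsilon>" using eps by (simp add: divide_right_mono)
      then show "norm (exp ((\<psi> y - c x y) / \<epsilon>)) \<le> exp ((B + 1)/\<epsilon>)" by simp
    qed
    show "(\<lambda>y. exp ((\<psi> y - c x y) / \<epsilon>)) \<in> borel_measurable \<nu>"
      by (rule integrand_meas[OF s assms(2)])
  qed
qed

definition Zf :: "'y measure \<Rightarrow> ('y \<Rightarrow> real) \<Rightarrow> 'x \<Rightarrow> real" where
  "Zf \<nu> \<psi> x = (\<integral>y. exp ((\<psi> y - c x y) / \<epsilon>) \<partial>\<nu>)"

lemma S_Z: "ctransX c \<epsilon> \<nu> \<psi> x = - \<epsilon> * ln (Zf \<nu> \<psi> x)"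
  by (simp add: ctransX_def Zf_def)

lemma Z_int:
  assumes "borel_prob \<nu>" "bmf \<psi> lo hi"
  shows "integrable \<nu> (\<lambda>y. exp ((\<psi> y - c x y) / \<epsilon>))"
proof (rule integrand_int[where B="max \<bar>lo\<bar> \<bar>hi\<bar>"])
  fix y
  have "lo \<le> \<psi> y" "\<psi> y \<le> hi" using assms(2) by (auto simp: bmf_def)
  then show "\<bar>\<psi> y\<bar> \<le> max \<bar>lo\<bar> \<bar>hi\<bar>" by linarith
qed (use assms in \<open>auto simp: bmf_def\<close>)

lemma Z_bounds:
  assumes nu: "borel_prob \<nu>" and b: "bmf \<psi> lo hi"
  shows "exp ((lo - 1)/\<epsilon>) \<le> Zf \<nu> \<psi> x \<and> Zf \<nu> \<psi> x \<le> exp ((hi + 1)/\<epsilon>)"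
proof -
  interpret prob_space \<nu> using nu by (rule bp_prob)
  have i: "integrable \<nu> (\<lambda>y. exp ((\<psi> y - c x y) / \<epsilon>))" by (rule Z_int[OF nu b])
  have "(\<integral>y. exp ((lo - 1)/\<epsilon>) \<partial>\<nu>) \<le> Zf \<nu> \<psi> x" unfolding Zf_def
  proof (rule integral_mono[OF _ i])
    fix y
    have "lo \<le> \<psi> y" using b by (auto simp: bmf_def)
    then have "lo - 1 \<le> \<psi> y - c x y" using cb[of x y] by (auto simp: abs_le_iff)
    then show "exp ((lo - 1)/\<epsilon>) \<le> exp ((\<psi> y - c x y) / \<epsilon>)" using eps by (simp add: divide_right_mono)
  qed simp
  moreover have "Zf \<nu> \<psi> x \<le> (\<integral>y. exp ((hi + 1)/\<epsilon>) \<partial>\<nu>)" unfolding Zf_def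
  proof (rule integral_mono[OF i])
    fix y
    have "\<psi> y \<le> hi" using b by (auto simp: bmf_def)
    then have "\<psi> y - c x y \<le> hi + 1" using cb[of x y] by (auto simp: abs_le_iff)
    then show "exp ((\<psi> y - c x y) / \<epsilon>) \<le> exp ((hi + 1)/\<epsilon>)" using eps by (simp add: divide_right_mono)
  qed simp
  ultimately show ?thesis by (simp add: prob_space.prob_space[OF bp_prob[OF nu]])
qed

lemma Z_pos:
  assumes "borel_prob \<nu>" "bmf \<psi> lo hi"
  shows "Zf \<nu> \<psi> x > 0"
  using Z_bounds[OF assms, of x] by (smt (verit) exp_gt_zero)

lemma S_bounds:
  assumes nu: "borel_prob \<nu>" and b: "bmf \<psi> lo hi"
  shows "- hi - 1 \<le> ctransX c \<epsilon> \<nu> \<psi> x \<and> ctransX c \<epsilon> \<nu> \<psi> x \<le> 1 - lo"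
proof -
  have z: "exp ((lo - 1)/\<epsilon>) \<le> Zf \<nu> \<psi> x" "Zf \<nu> \<psi> x \<le> exp ((hi + 1)/\<epsilon>)"
    using Z_bounds[OF nu b] by auto
  have zp: "Zf \<nu> \<psi> x > 0" by (rule Z_pos[OF nu b])
  have "(lo - 1)/\<epsilon> \<le> ln (Zf \<nu> \<psi> x)" using z(1) zp by (subst ln_ge_iff) auto
  then have 1: "lo - 1 \<le> \<epsilon> * ln (Zf \<nu> \<psi> x)" using eps by (simp add: field_simps)
  have "ln (Zf \<nu> \<psi> x) \<le> ln (exp ((hi + 1)/\<epsilon>))" using z(2) zp by (subst ln_le_cancel_iff) auto
  then have "ln (Zf \<nu> \<psi> x) \<le> (hi + 1)/\<epsilon>" by simp
  then have 2: "\<epsilon> * ln (Zf \<nu> \<psi> x) \<le> hi + 1" using eps by (simp add: field_simps)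
  show ?thesis unfolding S_Z using 1 2 by auto
qed

lemma S_meas:
  assumes nu: "borel_prob \<nu>" and b: "bmf \<psi> lo hi"
  shows "ctransX c \<epsilon> \<nu> \<psi> \<in> borel_measurable borel"
proof -
  interpret prob_space \<nu> using nu by (rule bp_prob)
  have s: "sets \<nu> = sets borel" using nu by (rule bp_sets)
  have [measurable]: "(\<lambda>z. c (fst z) (snd z)) \<in> borel_measurable (borel \<Otimes>\<^sub>M \<nu>)" by (rule c_meas_nu[OF s])
  have [measurable]: "\<psi> \<in> borel_measurable \<nu>" using b unfolding bmf_def meas_transfer[OF s] by simp
  have "(\<lambda>x. \<integral>y. exp ((\<psi> y - c x y) / \<epsilon>) \<partial>\<nu>) \<in> borel_measurable borel"
    by measurable
  then show ?thesis unfolding ctransX_def by measurable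
qed

lemma bmf_shift: "bmf \<psi> lo hi \<Longrightarrow> bmf (\<lambda>y. \<psi> y + t) (lo + t) (hi + t)"
  by (auto simp: bmf_def)

lemma S_shift:
  assumes nu: "borel_prob \<nu>" and b: "bmf \<psi> lo hi"
  shows "ctransX c \<epsilon> \<nu> (\<lambda>y. \<psi> y + t) x = ctransX c \<epsilon> \<nu> \<psi> x - t"
proof -
  have "Zf \<nu> (\<lambda>y. \<psi> y + t) x = (\<integral>y. exp (t/\<epsilon>) * exp ((\<psi> y - c x y) / \<epsilon>) \<partial>\<nu>)"
    unfolding Zf_def by (rule Bochner_Integration.integral_cong) (auto simp: exp_add[symmetric] add_divide_distrib[symmetric])
  also have "\<dots> = exp (t/\<epsilon>) * Zf \<nu> \<psi> x" unfolding Zf_def by simp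
  finally have e: "Zf \<nu> (\<lambda>y. \<psi> y + t) x = exp (t/\<epsilon>) * Zf \<nu> \<psi> x" .
  have zp: "Zf \<nu> \<psi> x > 0" by (rule Z_pos[OF nu b])
  show ?thesis unfolding S_Z e using zp eps by (simp add: ln_mult field_simps)
qed

lemma S_mono:
  assumes nu: "borel_prob \<nu>" and b1: "bmf \<psi>1 lo1 hi1" and b2: "bmf \<psi>2 lo2 hi2"
    and le: "\<And>y. \<psi>1 y \<le> \<psi>2 y"
  shows "ctransX c \<epsilon> \<nu> \<psi>2 x \<le> ctransX c \<epsilon> \<nu> \<psi>1 x"
proof -
  have "Zf \<nu> \<psi>1 x \<le> Zf \<nu> \<psi>2 x" unfolding Zf_def
    by (rule integral_mono[OF Z_int[OF nu b1] Z_int[OF nu b2]])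
       (use le eps in \<open>auto simp: divide_right_mono\<close>)
  then have "ln (Zf \<nu> \<psi>1 x) \<le> ln (Zf \<nu> \<psi>2 x)" using Z_pos[OF nu b1] Z_pos[OF nu b2] by simp
  then show ?thesis unfolding S_Z using eps by simp
qed

lemma S_nonexp:
  assumes nu: "borel_prob \<nu>" and b1: "bmf \<psi>1 lo1 hi1" and b2: "bmf \<psi>2 lo2 hi2"
    and d: "\<And>y. \<bar>\<psi>1 y - \<psi>2 y\<bar> \<le> d"
  shows "\<bar>ctransX c \<epsilon> \<nu> \<psi>1 x - ctransX c \<epsilon> \<nu> \<psi>2 x\<bar> \<le> d"
proof -
  have "ctransX c \<epsilon> \<nu> (\<lambda>y. \<psi>2 y + d) x \<le> ctransX c \<epsilon> \<nu> \<psi>1 x"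
    by (rule S_mono[OF nu b1 bmf_shift[OF b2]]) (use d in \<open>smt (verit)\<close>)
  moreover have "ctransX c \<epsilon> \<nu> (\<lambda>y. \<psi>1 y + d) x \<le> ctransX c \<epsilon> \<nu> \<psi>2 x"
    by (rule S_mono[OF nu b2 bmf_shift[OF b1]]) (use d in \<open>smt (verit)\<close>)
  ultimately show ?thesis using S_shift[OF nu b1, of d x] S_shift[OF nu b2, of d x] by linarith
qed

lemma S_osc:
  assumes nu: "borel_prob \<nu>" and b: "bmf \<psi> lo hi"
  shows "ctransX c \<epsilon> \<nu> \<psi> x - ctransX c \<epsilon> \<nu> \<psi> x' \<le> 2"
proof -
  have "Zf \<nu> \<psi> x' \<le> (\<integral>y. exp (2/\<epsilon>) * exp ((\<psi> y - c x y) / \<epsilon>) \<partial>\<nu>)" unfolding Zf_def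
  proof (rule integral_mono[OF Z_int[OF nu b]])
    show "integrable \<nu> (\<lambda>y. exp (2/\<epsilon>) * exp ((\<psi> y - c x y) / \<epsilon>))"
      using Z_int[OF nu b] by simp
    fix y
    have "\<psi> y - c x' y \<le> 2 + (\<psi> y - c x y)" using cb[of x y] cb[of x' y] by (auto simp: abs_le_iff)
    then have "(\<psi> y - c x' y)/\<epsilon> \<le> 2/\<epsilon> + (\<psi> y - c x y)/\<epsilon>" using eps
      by (simp add: add_divide_distrib[symmetric] divide_right_mono)
    then show "exp ((\<psi> y - c x' y) / \<epsilon>) \<le> exp (2/\<epsilon>) * exp ((\<psi> y - c x y) / \<epsilon>)"
      by (simp add: exp_add[symmetric])
  qed
  also have "\<dots> = exp (2/\<epsilon>) * Zf \<nu> \<psi> x" unfolding Zf_def by simp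
  finally have "ln (Zf \<nu> \<psi> x') \<le> ln (exp (2/\<epsilon>) * Zf \<nu> \<psi> x)"
    using Z_pos[OF nu b, of x'] Z_pos[OF nu b, of x] by simp
  also have "\<dots> = 2/\<epsilon> + ln (Zf \<nu> \<psi> x)" using Z_pos[OF nu b, of x] by (simp add: ln_mult)
  finally show ?thesis unfolding S_Z using eps by (simp add: field_simps)
qed

lemma int_exp:
  fixes h :: "'y \<Rightarrow> real" and B :: real
  assumes nu: "borel_prob \<nu>" and hm: "h \<in> borel_measurable borel" and hb: "\<And>y. h y \<le> B"
  shows "integrable \<nu> (\<lambda>y. exp (h y))"
proof -
  interpret prob_space \<nu> using nu by (rule bp_prob)
  have s: "sets \<nu> = sets borel" using nu by (rule bp_sets)
  show ?thesis
  proof (rule integrable_const_bound[where B="exp B"])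
    show "AE y in \<nu>. norm (exp (h y)) \<le> exp B" using hb by simp
    have "(\<lambda>y. exp (h y)) \<in> borel_measurable borel" using hm by measurable
    then show "(\<lambda>y. exp (h y)) \<in> borel_measurable \<nu>" unfolding meas_transfer[OF s] .
  qed
qed

definition th where "th = exp (-2/\<epsilon>)"
definition kap where "kap D = (1-th)*exp(D/\<epsilon>)/(th + (1-th)*exp(D/\<epsilon>))"

lemma th_bounds: "0 < th" "th < 1"
  unfolding th_def using eps by auto

lemma kap_bounds: "0 \<le> kap D" "kap D < 1"
proof -
  have "0 < 1 - th" using th_bounds by simp
  then show "0 \<le> kap D" unfolding kap_def using th_bounds by (simp add: add_pos_pos)
  show "kap D < 1" unfolding kap_def using th_bounds \<open>0 < 1 - th\<close> by (simp add: add_pos_pos divide_less_eq)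
qed

lemma S_contr:
  assumes nu: "borel_prob \<nu>" and b1: "bmf \<psi>1 lo1 hi1" and b2: "bmf \<psi>2 lo2 hi2"
    and hl: "\<And>y. m \<le> \<psi>1 y - \<psi>2 y" and hu: "\<And>y. \<psi>1 y - \<psi>2 y \<le> M" and D: "M - m \<le> D"
  shows "\<exists>m' M'. (\<forall>x. m' \<le> ctransX c \<epsilon> \<nu> \<psi>1 x - ctransX c \<epsilon> \<nu> \<psi>2 x
                     \<and> ctransX c \<epsilon> \<nu> \<psi>1 x - ctransX c \<epsilon> \<nu> \<psi>2 x \<le> M') \<and> M' - m' \<le> kap D * (M - m)"
proof -
  interpret prob_space \<nu> using nu by (rule bp_prob)
  have [measurable]: "\<psi>1 \<in> borel_measurable borel" "\<psi>2 \<in> borel_measurable borel"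
    using b1 b2 by (auto simp: bmf_def)
  note c_meas2[measurable]
  have r1: "lo1 \<le> \<psi>1 y" "\<psi>1 y \<le> hi1" "lo2 \<le> \<psi>2 y" "\<psi>2 y \<le> hi2" for y
    using b1 b2 by (auto simp: bmf_def)
  define \<theta> where "\<theta> = th"
  have th: "0 < \<theta>" "\<theta> < 1" unfolding \<theta>_def using th_bounds by auto
  define P where "P = (\<integral>y. exp (\<psi>2 y/\<epsilon>) \<partial>\<nu>)"
  define Q where "Q = (\<integral>y. exp (\<psi>1 y/\<epsilon>) \<partial>\<nu>)"
  have iP: "integrable \<nu> (\<lambda>y. exp (\<psi>2 y/\<epsilon>))"
    by (rule int_exp[OF nu _, where B="hi2/\<epsilon>"]) (use r1 eps in \<open>auto simp: divide_right_mono\<close>)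
  have iQ: "integrable \<nu> (\<lambda>y. exp (\<psi>1 y/\<epsilon>))"
    by (rule int_exp[OF nu _, where B="hi1/\<epsilon>"]) (use r1 eps in \<open>auto simp: divide_right_mono\<close>)
  have "(\<integral>y. exp (lo2/\<epsilon>) \<partial>\<nu>) \<le> P" unfolding P_def
    by (rule integral_mono[OF _ iP]) (use r1 eps in \<open>auto simp: divide_right_mono\<close>)
  then have "exp (lo2/\<epsilon>) \<le> P" by (simp add: prob_space)
  then have Pp: "P > 0" by (smt (verit) exp_gt_zero)
  define a where "a = exp (m/\<epsilon>)"
  define b where "b = exp (M/\<epsilon>)"
  define A where "A = Q / P"
  have ap: "a > 0" unfolding a_def by simp
  have "(\<integral>y. a * exp (\<psi>2 y/\<epsilon>) \<partial>\<nu>) \<le> Q" unfolding Q_def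
  proof (rule integral_mono[OF _ iQ])
    show "integrable \<nu> (\<lambda>y. a * exp (\<psi>2 y / \<epsilon>))" using iP by simp
    fix y
    have "(m + \<psi>2 y)/\<epsilon> \<le> \<psi>1 y/\<epsilon>" using hl[of y] eps by (simp add: divide_right_mono)
    then show "a * exp (\<psi>2 y / \<epsilon>) \<le> exp (\<psi>1 y / \<epsilon>)" unfolding a_def
      by (simp add: exp_add[symmetric] add_divide_distrib)
  qed
  then have "a * P \<le> Q" unfolding P_def by simp
  then have aA: "a \<le> A" unfolding A_def using Pp by (simp add: le_divide_eq)
  have key: "\<theta>*A + (1-\<theta>)*a \<le> Zf \<nu> \<psi>1 x / Zf \<nu> \<psi>2 x \<and> Zf \<nu> \<psi>1 x / Zf \<nu> \<psi>2 x \<le> \<theta>*A + (1-\<theta>)*b" for x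
  proof -
    define Z1 where "Z1 = Zf \<nu> \<psi>1 x"
    define Z2 where "Z2 = Zf \<nu> \<psi>2 x"
    have Z2p: "Z2 > 0" unfolding Z2_def by (rule Z_pos[OF nu b2])
    define k where "k = \<theta> * Z2 / P"
    have i1: "integrable \<nu> (\<lambda>y. exp ((\<psi>1 y - c x y) / \<epsilon>))" by (rule Z_int[OF nu b1])
    have i2: "integrable \<nu> (\<lambda>y. exp ((\<psi>2 y - c x y) / \<epsilon>))" by (rule Z_int[OF nu b2])
    have "Z2 \<le> (\<integral>y. exp (1/\<epsilon>) * exp (\<psi>2 y/\<epsilon>) \<partial>\<nu>)" unfolding Z2_def Zf_def
    proof (rule integral_mono[OF i2])
      show "integrable \<nu> (\<lambda>y. exp (1/\<epsilon>) * exp (\<psi>2 y / \<epsilon>))" using iP by simp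
      fix y
      have "(\<psi>2 y - c x y)/\<epsilon> \<le> (1 + \<psi>2 y)/\<epsilon>" using cb[of x y] eps by (simp add: divide_right_mono abs_le_iff)
      then show "exp ((\<psi>2 y - c x y) / \<epsilon>) \<le> exp (1/\<epsilon>) * exp (\<psi>2 y / \<epsilon>)"
        by (simp add: exp_add[symmetric] add_divide_distrib)
    qed
    then have "Z2 \<le> exp (1/\<epsilon>) * P" unfolding P_def by simp
    then have "k \<le> \<theta> * exp (1/\<epsilon>)" unfolding k_def using Pp th by (simp add: divide_le_eq mult.commute mult.left_commute)
    also have "\<theta> * exp (1/\<epsilon>) = exp (-1/\<epsilon>)" unfolding \<theta>_def th_def by (simp add: exp_add[symmetric] add_divide_distrib[symmetric])
    finally have kle: "k \<le> exp (-1/\<epsilon>)" .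
    have kp: "k > 0" unfolding k_def using th Z2p Pp by simp
    have nn: "0 \<le> exp ((\<psi>2 y - c x y) / \<epsilon>) - k * exp (\<psi>2 y/\<epsilon>)" for y
    proof -
      have "(-1 + \<psi>2 y)/\<epsilon> \<le> (\<psi>2 y - c x y)/\<epsilon>" using cb[of x y] eps by (simp add: divide_right_mono abs_le_iff)
      then have "exp (-1/\<epsilon>) * exp (\<psi>2 y/\<epsilon>) \<le> exp ((\<psi>2 y - c x y) / \<epsilon>)"
        by (simp add: exp_add[symmetric] add_divide_distrib diff_divide_distrib)
      moreover have "k * exp (\<psi>2 y/\<epsilon>) \<le> exp (-1/\<epsilon>) * exp (\<psi>2 y/\<epsilon>)"
        using kle by (intro mult_right_mono) auto
      ultimately show ?thesis by linarith
    qed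
    have fac: "exp ((\<psi>1 y - c x y) / \<epsilon>) - k * exp (\<psi>1 y/\<epsilon>)
        = exp ((\<psi>1 y - \<psi>2 y)/\<epsilon>) * (exp ((\<psi>2 y - c x y) / \<epsilon>) - k * exp (\<psi>2 y/\<epsilon>))" for y
      by (simp add: right_diff_distrib exp_add[symmetric] add_divide_distrib[symmetric])
    have gl: "a \<le> exp ((\<psi>1 y - \<psi>2 y)/\<epsilon>)" for y unfolding a_def using hl[of y] eps by (simp add: divide_right_mono)
    have gu: "exp ((\<psi>1 y - \<psi>2 y)/\<epsilon>) \<le> b" for y unfolding b_def using hu[of y] eps by (simp add: divide_right_mono)
    have iD1: "integrable \<nu> (\<lambda>y. exp ((\<psi>1 y - c x y) / \<epsilon>) - k * exp (\<psi>1 y/\<epsilon>))" using i1 iQ by simp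
    have iD2: "integrable \<nu> (\<lambda>y. exp ((\<psi>2 y - c x y) / \<epsilon>) - k * exp (\<psi>2 y/\<epsilon>))" using i2 iP by simp
    have I1: "(\<integral>y. exp ((\<psi>1 y - c x y) / \<epsilon>) - k * exp (\<psi>1 y/\<epsilon>) \<partial>\<nu>) = Z1 - k * Q"
      unfolding Z1_def Zf_def Q_def using i1 iQ by simp
    have I2: "(\<integral>y. exp ((\<psi>2 y - c x y) / \<epsilon>) - k * exp (\<psi>2 y/\<epsilon>) \<partial>\<nu>) = Z2 - k * P"
      unfolding Z2_def Zf_def P_def using i2 iP by simp
    have kP: "k * P = \<theta> * Z2" unfolding k_def using Pp by simp
    have kQ: "k * Q = \<theta> * A * Z2" unfolding k_def A_def by simp
    have Ica: "(\<integral>y. a * (exp ((\<psi>2 y - c x y) / \<epsilon>) - k * exp (\<psi>2 y/\<epsilon>)) \<partial>\<nu>) = a * ((1-\<theta>) * Z2)"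
      by (simp only: integral_mult_right_zero I2 kP) (simp add: algebra_simps)
    have "(\<integral>y. a * (exp ((\<psi>2 y - c x y) / \<epsilon>) - k * exp (\<psi>2 y/\<epsilon>)) \<partial>\<nu>)
          \<le> (\<integral>y. exp ((\<psi>1 y - c x y) / \<epsilon>) - k * exp (\<psi>1 y/\<epsilon>) \<partial>\<nu>)"
      by (rule integral_mono[OF _ iD1]) (use iD2 in simp, unfold fac, rule mult_right_mono[OF gl nn])
    then have L: "a * ((1-\<theta>) * Z2) \<le> Z1 - \<theta> * A * Z2" unfolding I1 kQ Ica .
    have Icb: "(\<integral>y. b * (exp ((\<psi>2 y - c x y) / \<epsilon>) - k * exp (\<psi>2 y/\<epsilon>)) \<partial>\<nu>) = b * ((1-\<theta>) * Z2)"
      by (simp only: integral_mult_right_zero I2 kP) (simp add: algebra_simps)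
    have "(\<integral>y. exp ((\<psi>1 y - c x y) / \<epsilon>) - k * exp (\<psi>1 y/\<epsilon>) \<partial>\<nu>)
          \<le> (\<integral>y. b * (exp ((\<psi>2 y - c x y) / \<epsilon>) - k * exp (\<psi>2 y/\<epsilon>)) \<partial>\<nu>)"
      by (rule integral_mono[OF iD1]) (use iD2 in simp, unfold fac, rule mult_right_mono[OF gu nn])
    then have U: "Z1 - \<theta> * A * Z2 \<le> b * ((1-\<theta>) * Z2)" unfolding I1 kQ Icb .
    have "\<theta>*A + (1-\<theta>)*a \<le> Z1 / Z2" using L Z2p by (simp add: le_divide_eq algebra_simps)
    moreover have "Z1 / Z2 \<le> \<theta>*A + (1-\<theta>)*b"
    proof -
      have "Z1 \<le> (\<theta>*A + (1-\<theta>)*b) * Z2" using U by (simp add: algebra_simps)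
      then show ?thesis using Z2p by (simp add: divide_le_eq)
    qed
    ultimately show ?thesis unfolding Z1_def Z2_def by simp
  qed
  have Yp: "0 < \<theta>*A + (1-\<theta>)*a" using th ap aA by (smt (verit) mult_pos_pos)
  have mM: "m \<le> M" using hl[of undefined] hu[of undefined] by simp
  then have ab: "a \<le> b" unfolding a_def b_def using eps by (simp add: divide_right_mono)
  have Xp: "0 < \<theta>*A + (1-\<theta>)*b" using Yp ab th by (smt (verit) mult_left_mono)
  define m' where "m' = - \<epsilon> * ln (\<theta>*A + (1-\<theta>)*b)"
  define M' where "M' = - \<epsilon> * ln (\<theta>*A + (1-\<theta>)*a)"
  have diff: "ctransX c \<epsilon> \<nu> \<psi>1 x - ctransX c \<epsilon> \<nu> \<psi>2 x = - \<epsilon> * ln (Zf \<nu> \<psi>1 x / Zf \<nu> \<psi>2 x)" for x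
    unfolding S_Z using Z_pos[OF nu b1, of x] Z_pos[OF nu b2, of x] by (simp add: ln_div algebra_simps)
  have bnds: "m' \<le> ctransX c \<epsilon> \<nu> \<psi>1 x - ctransX c \<epsilon> \<nu> \<psi>2 x \<and> ctransX c \<epsilon> \<nu> \<psi>1 x - ctransX c \<epsilon> \<nu> \<psi>2 x \<le> M'" for x
  proof -
    have zp: "0 < Zf \<nu> \<psi>1 x / Zf \<nu> \<psi>2 x" using Z_pos[OF nu b1, of x] Z_pos[OF nu b2, of x] by simp
    have "ln (Zf \<nu> \<psi>1 x / Zf \<nu> \<psi>2 x) \<le> ln (\<theta>*A + (1-\<theta>)*b)" using key[of x] zp Xp by simp
    moreover have "ln (\<theta>*A + (1-\<theta>)*a) \<le> ln (Zf \<nu> \<psi>1 x / Zf \<nu> \<psi>2 x)" using key[of x] zp Yp by simp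
    ultimately show ?thesis unfolding diff m'_def M'_def using eps by simp
  qed
  have "b \<le> exp (D/\<epsilon>) * a" unfolding a_def b_def using D eps
    by (simp add: exp_add[symmetric] add_divide_distrib[symmetric] divide_right_mono)
  from contr_real[OF th ap aA ab this]
  have "ln (\<theta>*A + (1-\<theta>)*b) - ln (\<theta>*A + (1-\<theta>)*a) \<le> kap D * ((M - m)/\<epsilon>)"
    unfolding kap_def \<theta>_def a_def b_def by (simp add: diff_divide_distrib)
  then have "M' - m' \<le> kap D * (M - m)" unfolding m'_def M'_def using eps
    by (simp add: field_simps)
  with bnds show ?thesis by blast
qed

lemma kern_swap: "kern (\<lambda>y x. c x y) \<epsilon>"
proof
  have [measurable]: "(\<lambda>z. c (fst z) (snd z)) \<in> borel_measurable (borel \<Otimes>\<^sub>M borel)" by (rule cm)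
  have "(\<lambda>z. (\<lambda>w. c (fst w) (snd w)) (snd z, fst z)) \<in> borel_measurable (borel \<Otimes>\<^sub>M borel)"
    by measurable
  then show "(\<lambda>z. c (snd z) (fst z)) \<in> borel_measurable (borel \<Otimes>\<^sub>M borel)" by simp
qed (use cb eps in auto)

lemma prod_meas:
  assumes mu: "sets \<mu> = sets borel" and nu: "sets \<nu> = sets borel"
    and b1: "bmf \<phi> l1 h1" and b2: "bmf \<psi> l2 h2"
  shows "(\<lambda>z. exp ((\<phi> (fst z) + \<psi> (snd z) - c (fst z) (snd z))/\<epsilon>)) \<in> borel_measurable (\<mu> \<Otimes>\<^sub>M \<nu>)"
proof -
  have [measurable]: "\<phi> \<in> borel_measurable borel" "\<psi> \<in> borel_measurable borel" using b1 b2 by (auto simp: bmf_def)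
  have [measurable]: "(\<lambda>z. c (fst z) (snd z)) \<in> borel_measurable (borel \<Otimes>\<^sub>M borel)" by (rule cm)
  have e: "borel_measurable (\<mu> \<Otimes>\<^sub>M \<nu>) = borel_measurable (borel \<Otimes>\<^sub>M borel)"
    by (rule measurable_cong_sets[OF sets_pair_measure_cong[OF mu nu] refl])
  show ?thesis unfolding e by measurable
qed

lemma prod_int:
  assumes mu: "borel_prob \<mu>" and nu: "borel_prob \<nu>"
    and b1: "bmf \<phi> l1 h1" and b2: "bmf \<psi> l2 h2"
  shows "integrable (\<mu> \<Otimes>\<^sub>M \<nu>) (\<lambda>z. exp ((\<phi> (fst z) + \<psi> (snd z) - c (fst z) (snd z))/\<epsilon>))"
proof -
  interpret M: prob_space \<mu> using mu by (rule bp_prob)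
  interpret N: prob_space \<nu> using nu by (rule bp_prob)
  interpret P: pair_prob_space \<mu> \<nu> ..
  show ?thesis
  proof (rule P.integrable_const_bound[where B="exp ((h1 + h2 + 1)/\<epsilon>)"])
    show "(\<lambda>z. exp ((\<phi> (fst z) + \<psi> (snd z) - c (fst z) (snd z))/\<epsilon>)) \<in> borel_measurable (\<mu> \<Otimes>\<^sub>M \<nu>)"
      by (rule prod_meas[OF bp_sets[OF mu] bp_sets[OF nu] b1 b2])
    show "AE z in \<mu> \<Otimes>\<^sub>M \<nu>. norm (exp ((\<phi> (fst z) + \<psi> (snd z) - c (fst z) (snd z))/\<epsilon>)) \<le> exp ((h1 + h2 + 1)/\<epsilon>)"
    proof (rule AE_I2)
      fix z :: "'x \<times> 'y"
      have "\<phi> (fst z) \<le> h1" "\<psi> (snd z) \<le> h2" using b1 b2 by (auto simp: bmf_def)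
      then have "\<phi> (fst z) + \<psi> (snd z) - c (fst z) (snd z) \<le> h1 + h2 + 1" using cb[of "fst z" "snd z"] by (auto simp: abs_le_iff)
      then show "norm (exp ((\<phi> (fst z) + \<psi> (snd z) - c (fst z) (snd z))/\<epsilon>)) \<le> exp ((h1 + h2 + 1)/\<epsilon>)"
        using eps by (simp add: divide_right_mono)
    qed
  qed
qed

lemma fub:
  assumes mu: "borel_prob \<mu>" and nu: "borel_prob \<nu>"
    and b1: "bmf \<phi> l1 h1" and b2: "bmf \<psi> l2 h2"
  shows "(\<integral>x. (\<integral>y. exp ((\<phi> x + \<psi> y - c x y)/\<epsilon>) \<partial>\<nu>) \<partial>\<mu>) = (\<integral>y. (\<integral>x. exp ((\<phi> x + \<psi> y - c x y)/\<epsilon>) \<partial>\<mu>) \<partial>\<nu>)"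
proof -
  interpret M: prob_space \<mu> using mu by (rule bp_prob)
  interpret N: prob_space \<nu> using nu by (rule bp_prob)
  interpret P: pair_prob_space \<mu> \<nu> ..
  have "integrable (\<mu> \<Otimes>\<^sub>M \<nu>) (case_prod (\<lambda>x y. exp ((\<phi> x + \<psi> y - c x y)/\<epsilon>)))"
    using prod_int[OF mu nu b1 b2] by (simp add: case_prod_unfold)
  from P.Fubini_integral[OF this] show ?thesis by simp
qed

lemma inner_one:
  assumes nu: "borel_prob \<nu>" and b: "bmf \<psi> lo hi" and eq: "\<phi> x = ctransX c \<epsilon> \<nu> \<psi> x"
  shows "(\<integral>y. exp ((\<phi> x + \<psi> y - c x y)/\<epsilon>) \<partial>\<nu>) = 1"
proof -
  have "(\<integral>y. exp ((\<phi> x + \<psi> y - c x y)/\<epsilon>) \<partial>\<nu>) = (\<integral>y. exp (\<phi> x/\<epsilon>) * exp ((\<psi> y - c x y)/\<epsilon>) \<partial>\<nu>)"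
    by (rule Bochner_Integration.integral_cong) (auto simp: exp_add[symmetric] add_divide_distrib[symmetric] algebra_simps)
  also have "\<dots> = exp (\<phi> x/\<epsilon>) * Zf \<nu> \<psi> x" unfolding Zf_def by simp
  also have "exp (\<phi> x/\<epsilon>) = exp (- ln (Zf \<nu> \<psi> x))" unfolding eq S_Z using eps by simp
  also have "\<dots> * Zf \<nu> \<psi> x = 1" using Z_pos[OF nu b, of x] by (simp add: exp_minus field_simps)
  finally show ?thesis .
qed

definition Fop :: "'x measure \<Rightarrow> 'y measure \<Rightarrow> ('y \<Rightarrow> real) \<Rightarrow> 'y \<Rightarrow> real" where
  "Fop \<mu> \<nu> \<psi> = ctransY c \<epsilon> \<mu> (ctransX c \<epsilon> \<nu> \<psi>)"

lemma S_bmf: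
  assumes nu: "borel_prob \<nu>" and b: "bmf \<psi> lo hi"
  shows "bmf (ctransX c \<epsilon> \<nu> \<psi>) (- hi - 1) (1 - lo)"
  using S_bounds[OF nu b] S_meas[OF nu b] by (auto simp: bmf_def)

context
  fixes \<mu> :: "'x measure" and \<nu> :: "'y measure"
  assumes mu: "borel_prob \<mu>" and nu: "borel_prob \<nu>"
begin

interpretation K: kern "\<lambda>y x. c x y" \<epsilon> by (rule kern_swap)

lemma F_bmf:
  assumes b: "bmf \<psi> lo hi"
  shows "bmf (Fop \<mu> \<nu> \<psi>) (lo - 2) (hi + 2)"
  using K.S_bmf[OF mu S_bmf[OF nu b]] unfolding Fop_def ctransY_swap by (simp add: add.commute)

lemma F_osc:
  assumes b: "bmf \<psi> lo hi"
  shows "Fop \<mu> \<nu> \<psi> y - Fop \<mu> \<nu> \<psi> y' \<le> 2"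
  using K.S_osc[OF mu S_bmf[OF nu b]] unfolding Fop_def ctransY_swap by simp

lemma F_nonexp:
  assumes b1: "bmf \<psi>1 lo1 hi1" and b2: "bmf \<psi>2 lo2 hi2" and d: "\<And>y. \<bar>\<psi>1 y - \<psi>2 y\<bar> \<le> d"
  shows "\<bar>Fop \<mu> \<nu> \<psi>1 y - Fop \<mu> \<nu> \<psi>2 y\<bar> \<le> d"
proof -
  have "\<bar>ctransX c \<epsilon> \<nu> \<psi>1 x - ctransX c \<epsilon> \<nu> \<psi>2 x\<bar> \<le> d" for x by (rule S_nonexp[OF nu b1 b2 d])
  from K.S_nonexp[OF mu S_bmf[OF nu b1] S_bmf[OF nu b2] this]
  show ?thesis unfolding Fop_def ctransY_swap .
qed

lemma F_contr:
  assumes b1: "bmf \<psi>1 lo1 hi1" and b2: "bmf \<psi>2 lo2 hi2"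
    and hl: "\<And>y. m \<le> \<psi>1 y - \<psi>2 y" and hu: "\<And>y. \<psi>1 y - \<psi>2 y \<le> M" and D: "M - m \<le> D"
  shows "\<exists>m' M'. (\<forall>y. m' \<le> Fop \<mu> \<nu> \<psi>1 y - Fop \<mu> \<nu> \<psi>2 y \<and> Fop \<mu> \<nu> \<psi>1 y - Fop \<mu> \<nu> \<psi>2 y \<le> M')
                 \<and> M' - m' \<le> kap D * (M - m)"
proof -
  have mM: "m \<le> M" using hl[of undefined] hu[of undefined] by simp
  obtain m1 M1 where h1: "\<And>x. m1 \<le> ctransX c \<epsilon> \<nu> \<psi>1 x - ctransX c \<epsilon> \<nu> \<psi>2 x"
      "\<And>x. ctransX c \<epsilon> \<nu> \<psi>1 x - ctransX c \<epsilon> \<nu> \<psi>2 x \<le> M1" and w1: "M1 - m1 \<le> kap D * (M - m)"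
    using S_contr[OF nu b1 b2 hl hu D] by blast
  have "kap D * (M - m) \<le> M - m" using kap_bounds[of D] mM by (simp add: mult_left_le_one_le)
  then have D1: "M1 - m1 \<le> D" using w1 D by linarith
  obtain m2 M2 where h2: "\<forall>y. m2 \<le> Fop \<mu> \<nu> \<psi>1 y - Fop \<mu> \<nu> \<psi>2 y \<and> Fop \<mu> \<nu> \<psi>1 y - Fop \<mu> \<nu> \<psi>2 y \<le> M2"
      and w2: "M2 - m2 \<le> kap D * (M1 - m1)"
    using K.S_contr[OF mu S_bmf[OF nu b1] S_bmf[OF nu b2] h1 D1] unfolding Fop_def ctransY_swap by blast
  have "kap D * (M1 - m1) \<le> kap D * (kap D * (M - m))"
    using kap_bounds[of D] w1 by (intro mult_left_mono) auto
  also have "\<dots> \<le> kap D * (M - m)"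
    using kap_bounds[of D] mM by (simp add: mult_left_le_one_le)
  finally have "kap D * (M1 - m1) \<le> kap D * (M - m)" .
  then have "M2 - m2 \<le> kap D * (M - m)" using w2 by linarith
  then show ?thesis using h2 by blast
qed

lemma shift_zero:
  assumes b: "bmf \<zeta> lo hi" and fx: "\<And>y. Fop \<mu> \<nu> \<zeta> y = \<zeta> y + a"
  shows "a = 0"
proof -
  interpret M: prob_space \<mu> using mu by (rule bp_prob)
  interpret N: prob_space \<nu> using nu by (rule bp_prob)
  define \<phi> where "\<phi> = ctransX c \<epsilon> \<nu> \<zeta>"
  have b\<phi>: "bmf \<phi> (- hi - 1) (1 - lo)" unfolding \<phi>_def by (rule S_bmf[OF nu b])
  have L: "(\<integral>x. (\<integral>y. exp ((\<phi> x + \<zeta> y - c x y)/\<epsilon>) \<partial>\<nu>) \<partial>\<mu>) = 1"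
    using inner_one[OF nu b, of \<phi>] unfolding \<phi>_def by (simp add: M.prob_space)
  have inner: "(\<integral>x. exp ((\<phi> x + \<zeta> y - c x y)/\<epsilon>) \<partial>\<mu>) = exp (-a/\<epsilon>)" for y
  proof -
    have eq: "(\<lambda>y. \<zeta> y + a) y = ctransX (\<lambda>y x. c x y) \<epsilon> \<mu> \<phi> y"
      using fx[of y] unfolding Fop_def ctransY_swap \<phi>_def by simp
    have one: "(\<integral>x. exp (((\<zeta> y + a) + \<phi> x - c x y)/\<epsilon>) \<partial>\<mu>) = 1"
      using K.inner_one[where \<nu>=\<mu> and \<psi>=\<phi> and \<phi>="\<lambda>y. \<zeta> y + a" and x=y, OF mu b\<phi> eq] by simp
    have "(\<integral>x. exp ((\<phi> x + \<zeta> y - c x y)/\<epsilon>) \<partial>\<mu>) = (\<integral>x. exp (-a/\<epsilon>) * exp (((\<zeta> y + a) + \<phi> x - c x y)/\<epsilon>) \<partial>\<mu>)"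
      by (rule Bochner_Integration.integral_cong) (auto simp: exp_add[symmetric] add_divide_distrib[symmetric] algebra_simps)
    also have "\<dots> = exp (-a/\<epsilon>)" using one by simp
    finally show ?thesis .
  qed
  have R: "(\<integral>y. (\<integral>x. exp ((\<phi> x + \<zeta> y - c x y)/\<epsilon>) \<partial>\<mu>) \<partial>\<nu>) = exp (-a/\<epsilon>)"
    unfolding inner by (simp add: N.prob_space)
  have "exp (-a/\<epsilon>) = 1" using fub[OF mu nu b\<phi> b] L R by simp
  then show "a = 0" using eps by simp
qed

lemma zero_geom:
  fixes z C \<kappa> :: real
  assumes k: "0 \<le> \<kappa>" "\<kappa> < 1" and h: "\<And>n. \<bar>z\<bar> \<le> C * \<kappa>^n"
  shows "z = 0"
proof -
  have "(\<lambda>n. C * \<kappa>^n) \<longlonglongrightarrow> C * 0" using k by (intro tendsto_mult tendsto_const LIMSEQ_power_zero) simp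
  then have "\<bar>z\<bar> \<le> C * 0" by (rule LIMSEQ_le_const) (use h in auto)
  then show ?thesis by simp
qed

lemma sinkhorn: "\<exists>\<zeta>. bmf \<zeta> (-2) 2 \<and> (\<forall>y. Fop \<mu> \<nu> \<zeta> y = \<zeta> y)"
proof -
  define y0 :: 'y where "y0 = undefined"
  define G where "G \<psi> = (\<lambda>y. Fop \<mu> \<nu> \<psi> y - Fop \<mu> \<nu> \<psi> y0)" for \<psi>
  define \<zeta> where "\<zeta> n = (G ^^ n) (\<lambda>_. 0)" for n
  have \<zeta>S: "\<zeta> (Suc n) = G (\<zeta> n)" for n by (simp add: \<zeta>_def)
  have \<zeta>0: "\<zeta> 0 = (\<lambda>_. 0)" by (simp add: \<zeta>_def)
  have G_bmf: "bmf (G \<psi>) (-2) 2" if b: "bmf \<psi> lo hi" for \<psi> lo hi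
  proof -
    have [measurable]: "Fop \<mu> \<nu> \<psi> \<in> borel_measurable borel" using F_bmf[OF b] by (simp add: bmf_def)
    have "G \<psi> \<in> borel_measurable borel" unfolding G_def by measurable
    moreover have "-2 \<le> G \<psi> y \<and> G \<psi> y \<le> 2" for y
      using F_osc[OF b, of y y0] F_osc[OF b, of y0 y] unfolding G_def by simp
    ultimately show ?thesis by (simp add: bmf_def)
  qed
  have b\<zeta>: "bmf (\<zeta> n) (-2) 2" for n
  proof (induction n)
    case 0 then show ?case by (simp add: \<zeta>0 bmf_def)
  next
    case (Suc n) then show ?case unfolding \<zeta>S by (rule G_bmf)
  qed
  have \<zeta>y0: "\<zeta> n y0 = 0" for n by (cases n) (simp_all add: \<zeta>0 \<zeta>S G_def)
  define \<kappa> where "\<kappa> = kap 4"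
  have k: "0 \<le> \<kappa>" "\<kappa> < 1" unfolding \<kappa>_def using kap_bounds by auto
  have step: "\<exists>m M. (\<forall>y. m \<le> \<zeta> (Suc n) y - \<zeta> n y \<and> \<zeta> (Suc n) y - \<zeta> n y \<le> M) \<and> M - m \<le> 4 * \<kappa>^n" for n
  proof (induction n)
    case 0
    have "\<forall>y. -2 \<le> \<zeta> (Suc 0) y - \<zeta> 0 y \<and> \<zeta> (Suc 0) y - \<zeta> 0 y \<le> 2"
      using b\<zeta>[of "Suc 0"] by (simp add: \<zeta>0 bmf_def)
    then show ?case by (intro exI[of _ "-2"] exI[of _ 2]) simp
  next
    case (Suc n)
    then obtain m M where hm: "\<And>y. m \<le> \<zeta> (Suc n) y - \<zeta> n y" "\<And>y. \<zeta> (Suc n) y - \<zeta> n y \<le> M"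
      and w: "M - m \<le> 4 * \<kappa>^n" by blast
    have "\<kappa>^n \<le> 1" using k by (simp add: power_le_one)
    then have D: "M - m \<le> 4" using w by linarith
    obtain m' M' where h': "\<forall>y. m' \<le> Fop \<mu> \<nu> (\<zeta> (Suc n)) y - Fop \<mu> \<nu> (\<zeta> n) y \<and> Fop \<mu> \<nu> (\<zeta> (Suc n)) y - Fop \<mu> \<nu> (\<zeta> n) y \<le> M'"
      and w': "M' - m' \<le> kap 4 * (M - m)"
      using F_contr[OF b\<zeta>[of "Suc n"] b\<zeta>[of n] hm D] by blast
    define d0 where "d0 = Fop \<mu> \<nu> (\<zeta> (Suc n)) y0 - Fop \<mu> \<nu> (\<zeta> n) y0"
    have e: "\<zeta> (Suc (Suc n)) y - \<zeta> (Suc n) y = (Fop \<mu> \<nu> (\<zeta> (Suc n)) y - Fop \<mu> \<nu> (\<zeta> n) y) - d0" for y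
      unfolding \<zeta>S[of "Suc n"] \<zeta>S[of n] G_def d0_def by simp
    have "M' - m' \<le> \<kappa> * (4 * \<kappa>^n)" using w' w k unfolding \<kappa>_def
      by (smt (verit, best) mult_left_mono)
    then have "(M' - d0) - (m' - d0) \<le> 4 * \<kappa>^Suc n" by (simp add: algebra_simps)
    moreover have "\<forall>y. m' - d0 \<le> \<zeta> (Suc (Suc n)) y - \<zeta> (Suc n) y \<and> \<zeta> (Suc (Suc n)) y - \<zeta> (Suc n) y \<le> M' - d0"
      unfolding e using h' by auto
    ultimately show ?case by blast
  qed
  have dif: "\<bar>\<zeta> (Suc n) y - \<zeta> n y\<bar> \<le> 4 * \<kappa>^n" for n y
  proof -
    obtain m M where hm: "\<And>y. m \<le> \<zeta> (Suc n) y - \<zeta> n y" "\<And>y. \<zeta> (Suc n) y - \<zeta> n y \<le> M"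
      and w: "M - m \<le> 4 * \<kappa>^n" using step[of n] by blast
    have "m \<le> 0" "0 \<le> M" using hm[of y0] \<zeta>y0 by auto
    then show ?thesis using hm[of y] w by (simp add: abs_le_iff)
  qed
  define e where "e n = 4 * \<kappa>^n / (1-\<kappa>)" for n
  define \<zeta>i where "\<zeta>i y = lim (\<lambda>n. \<zeta> n y)" for y
  have conv: "(\<lambda>n. \<zeta> n y) \<longlonglongrightarrow> \<zeta>i y \<and> (\<forall>n. \<bar>\<zeta> n y - \<zeta>i y\<bar> \<le> e n)" for y
  proof -
    obtain L where L: "(\<lambda>n. \<zeta> n y) \<longlonglongrightarrow> L" "\<forall>n. \<bar>\<zeta> n y - L\<bar> \<le> 4 * \<kappa>^n / (1-\<kappa>)"
      using geom_conv[OF k, of "\<lambda>n. \<zeta> n y" 4] dif by blast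
    then have "\<zeta>i y = L" unfolding \<zeta>i_def by (simp add: limI)
    then show ?thesis using L unfolding e_def by simp
  qed
  have bi: "bmf \<zeta>i (-2) 2"
  proof -
    have "\<zeta>i \<in> borel_measurable borel"
      by (rule borel_measurable_LIMSEQ_real[of borel "\<lambda>n y. \<zeta> n y"]) (use conv b\<zeta> in \<open>auto simp: bmf_def\<close>)
    moreover have "-2 \<le> \<zeta>i y \<and> \<zeta>i y \<le> 2" for y
    proof
      show "-2 \<le> \<zeta>i y" by (rule LIMSEQ_le_const[OF conv[THEN conjunct1]]) (use b\<zeta> in \<open>auto simp: bmf_def\<close>)
      show "\<zeta>i y \<le> 2" by (rule LIMSEQ_le_const2[OF conv[THEN conjunct1]]) (use b\<zeta> in \<open>auto simp: bmf_def\<close>)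
    qed
    ultimately show ?thesis by (simp add: bmf_def)
  qed
  have fixG: "G \<zeta>i y = \<zeta>i y" for y
  proof -
    have "G \<zeta>i y - \<zeta>i y = 0"
    proof (rule zero_geom[OF k, where C="12/(1-\<kappa>)"])
    fix n
    have a1: "\<bar>Fop \<mu> \<nu> \<zeta>i z - Fop \<mu> \<nu> (\<zeta> n) z\<bar> \<le> e n" for z
      by (rule F_nonexp[OF bi b\<zeta>[of n]]) (use conv in \<open>simp add: abs_minus_commute\<close>)
    have a2: "\<bar>\<zeta> (Suc n) y - \<zeta>i y\<bar> \<le> e n"
    proof -
      have "e (Suc n) \<le> e n" unfolding e_def using k by (simp add: divide_right_mono mult_left_le_one_le)
      then show ?thesis using conv[of y] by (meson order_trans)
    qed
    have "\<zeta> (Suc n) y = Fop \<mu> \<nu> (\<zeta> n) y - Fop \<mu> \<nu> (\<zeta> n) y0" by (simp add: \<zeta>S G_def)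
    then have "\<bar>G \<zeta>i y - \<zeta>i y\<bar> \<le> 3 * e n" using a1[of y] a1[of y0] a2 unfolding G_def by (simp add: abs_le_iff)
    then show "\<bar>G \<zeta>i y - \<zeta>i y\<bar> \<le> 12 / (1 - \<kappa>) * \<kappa>^n" unfolding e_def by simp
    qed
    then show ?thesis by simp
  qed
  have fx: "Fop \<mu> \<nu> \<zeta>i y = \<zeta>i y + Fop \<mu> \<nu> \<zeta>i y0" for y
    using fixG[of y, unfolded G_def] by linarith
  have a0: "Fop \<mu> \<nu> \<zeta>i y0 = 0" by (rule shift_zero[OF bi fx])
  have "\<forall>y. Fop \<mu> \<nu> \<zeta>i y = \<zeta>i y" using fx a0 by simp
  then show ?thesis using bi by blast
qed

end

end


context kern begin
context
  fixes \<mu> :: "'x measure" and \<nu> :: "'y measure"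
  assumes mu: "borel_prob \<mu>" and nu: "borel_prob \<nu>"
begin

interpretation K: kern "\<lambda>y x. c x y" \<epsilon> by (rule kern_swap)

lemma bmf_abs: "bmf f l h \<Longrightarrow> \<bar>f y\<bar> \<le> \<bar>l\<bar> + \<bar>h\<bar>"
proof -
  assume "bmf f l h"
  then have "l \<le> f y" "f y \<le> h" by (auto simp: bmf_def)
  then show ?thesis by linarith
qed

lemmas sinkhorn_l = sinkhorn[OF mu nu]
lemmas F_osc_l = F_osc[OF mu nu]

lemma potentials:
  "\<exists>\<phi> \<psi>. bmf \<phi> (-3/2) (3/2) \<and> bmf \<psi> (-3/2) (3/2) \<and> (\<forall>x. \<phi> x = ctransX c \<epsilon> \<nu> \<psi> x)
      \<and> (\<forall>y. \<psi> y = ctransY c \<epsilon> \<mu> \<phi> y)"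
proof -
  obtain \<zeta> where b\<zeta>: "bmf \<zeta> (-2) 2" and fx: "\<And>y. Fop \<mu> \<nu> \<zeta> y = \<zeta> y" using sinkhorn_l by blast
  define \<phi>0 where "\<phi>0 = ctransX c \<epsilon> \<nu> \<zeta>"
  have b\<phi>0: "bmf \<phi>0 (-3) 3" unfolding \<phi>0_def using S_bmf[OF nu b\<zeta>] by simp
  have oa: "\<phi>0 x - \<phi>0 x' \<le> 2" for x x' unfolding \<phi>0_def by (rule S_osc[OF nu b\<zeta>])
  have ob: "\<zeta> y - \<zeta> y' \<le> 2" for y y' using F_osc_l[OF b\<zeta>, of y y'] fx by simp
  have oc: "-\<zeta> y - 3 \<le> \<phi>0 x \<and> \<phi>0 x \<le> 3 - \<zeta> y" for x y
  proof -
    have "\<zeta> y - 2 \<le> \<zeta> y' \<and> \<zeta> y' \<le> \<zeta> y + 2" for y'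
      using ob[of y y'] ob[of y' y] by linarith
    then have "bmf \<zeta> (\<zeta> y - 2) (\<zeta> y + 2)" using b\<zeta> by (simp add: bmf_def)
    from S_bounds[OF nu this, of x] show ?thesis unfolding \<phi>0_def by simp
  qed
  define L where "L = {\<phi>0 x - 3/2 | x. True} \<union> {- \<zeta> y - 3/2 | y. True}"
  define t where "t = Sup L"
  have Lne: "L \<noteq> {}" unfolding L_def by auto
  have Lbdd: "bdd_above L"
  proof (rule bdd_aboveI[where M=2])
    fix l assume "l \<in> L"
    then consider x where "l = \<phi>0 x - 3/2" | y where "l = - \<zeta> y - 3/2" unfolding L_def by blast
    then show "l \<le> 2"
    proof cases
      case 1
      from b\<phi>0 have "\<phi>0 x \<le> 3" unfolding bmf_def by blast
      then show ?thesis using 1 by simp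
    next
      case 2
      from b\<zeta> have "-2 \<le> \<zeta> y" unfolding bmf_def by blast
      then show ?thesis using 2 by simp
    qed
  qed
  have lo: "l \<le> t" if "l \<in> L" for l unfolding t_def by (rule cSup_upper[OF that Lbdd])
  have up1: "t \<le> \<phi>0 x + 3/2" for x unfolding t_def
  proof (rule cSup_least[OF Lne])
    fix l assume "l \<in> L"
    then consider x' where "l = \<phi>0 x' - 3/2" | y where "l = - \<zeta> y - 3/2" unfolding L_def by blast
    then show "l \<le> \<phi>0 x + 3/2"
    proof cases
      case 1 then show ?thesis using oa[of x' x] by simp
    next
      case 2 then show ?thesis using oc[of y x] by simp
    qed
  qed
  have up2: "t \<le> - \<zeta> y + 3/2" for y unfolding t_def
  proof (rule cSup_least[OF Lne])
    fix l assume "l \<in> L"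
    then consider x where "l = \<phi>0 x - 3/2" | y' where "l = - \<zeta> y' - 3/2" unfolding L_def by blast
    then show "l \<le> - \<zeta> y + 3/2"
    proof cases
      case 1 then show ?thesis using oc[of y x] by simp
    next
      case 2 then show ?thesis using ob[of y y'] by simp
    qed
  qed
  have lo1: "\<phi>0 x - 3/2 \<le> t" for x using lo unfolding L_def by blast
  have lo2: "- \<zeta> y - 3/2 \<le> t" for y using lo unfolding L_def by blast
  define \<phi> where "\<phi> x = \<phi>0 x + (- t)" for x
  define \<psi> where "\<psi> y = \<zeta> y + t" for y
  have [measurable]: "\<phi>0 \<in> borel_measurable borel" "\<zeta> \<in> borel_measurable borel"
    using b\<phi>0 b\<zeta> by (auto simp: bmf_def)
  have m\<phi>: "\<phi> \<in> borel_measurable borel" unfolding \<phi>_def by measurable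
  have m\<psi>: "\<psi> \<in> borel_measurable borel" unfolding \<psi>_def by measurable
  have "-3/2 \<le> \<phi> x \<and> \<phi> x \<le> 3/2" for x using lo1[of x] up1[of x] unfolding \<phi>_def by linarith
  then have b\<phi>: "bmf \<phi> (-3/2) (3/2)" using m\<phi> unfolding bmf_def by blast
  have "-3/2 \<le> \<psi> y \<and> \<psi> y \<le> 3/2" for y using lo2[of y] up2[of y] unfolding \<psi>_def by linarith
  then have b\<psi>: "bmf \<psi> (-3/2) (3/2)" using m\<psi> unfolding bmf_def by blast
  have r1: "\<phi> x = ctransX c \<epsilon> \<nu> \<psi> x" for x
    unfolding \<phi>_def \<psi>_def \<phi>0_def using S_shift[OF nu b\<zeta>, of t x] by simp
  have r2: "\<psi> y = ctransY c \<epsilon> \<mu> \<phi> y" for y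
  proof -
    have "ctransY c \<epsilon> \<mu> \<phi> y = ctransX (\<lambda>y x. c x y) \<epsilon> \<mu> (\<lambda>x. \<phi>0 x + (- t)) y"
      unfolding ctransY_swap \<phi>_def by simp
    also have "\<dots> = ctransX (\<lambda>y x. c x y) \<epsilon> \<mu> \<phi>0 y + t" using K.S_shift[OF mu b\<phi>0, of "-t" y] by simp
    also have "ctransX (\<lambda>y x. c x y) \<epsilon> \<mu> \<phi>0 y = \<zeta> y" using fx[of y] unfolding Fop_def ctransY_swap \<phi>0_def .
    finally show ?thesis unfolding \<psi>_def by simp
  qed
  show ?thesis using b\<phi> b\<psi> r1 r2 by blast
qed


lemma inner_int:
  assumes b1: "bmf \<phi> l1 h1" and b2: "bmf \<psi> l2 h2"
  shows "integrable \<nu> (\<lambda>y. exp ((\<phi> x + \<psi> y - c x y)/\<epsilon>))"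
proof -
  have [measurable]: "\<psi> \<in> borel_measurable borel" using b2 by (simp add: bmf_def)
  note c_meas2[measurable]
  show ?thesis
  proof (rule int_exp[OF nu, where B="(h1 + h2 + 1)/\<epsilon>"])
    show "(\<lambda>y. (\<phi> x + \<psi> y - c x y)/\<epsilon>) \<in> borel_measurable borel" by measurable
    fix y
    have "\<phi> x \<le> h1" "\<psi> y \<le> h2" using b1 b2 by (auto simp: bmf_def)
    then have "\<phi> x + \<psi> y - c x y \<le> h1 + h2 + 1" using cb[of x y] by (auto simp: abs_le_iff)
    then show "(\<phi> x + \<psi> y - c x y)/\<epsilon> \<le> (h1 + h2 + 1)/\<epsilon>" using eps by (simp add: divide_right_mono)
  qed
qed

lemma marg1:
  assumes b1: "bmf \<phi> l1 h1" and b2: "bmf \<psi> l2 h2"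
    and inner: "\<And>x. (\<integral>y. exp ((\<phi> x + \<psi> y - c x y)/\<epsilon>) \<partial>\<nu>) = 1"
  shows "distr (density (\<mu> \<Otimes>\<^sub>M \<nu>) (\<lambda>z. ennreal (exp ((\<phi> (fst z) + \<psi> (snd z) - c (fst z) (snd z))/\<epsilon>)))) \<mu> fst = \<mu>"
    (is "distr ?\<pi> \<mu> fst = \<mu>")
proof -
  interpret M: prob_space \<mu> using mu by (rule bp_prob)
  interpret N: prob_space \<nu> using nu by (rule bp_prob)
  interpret P: pair_prob_space \<mu> \<nu> ..
  have gm[measurable]: "(\<lambda>z. exp ((\<phi> (fst z) + \<psi> (snd z) - c (fst z) (snd z))/\<epsilon>)) \<in> borel_measurable (\<mu> \<Otimes>\<^sub>M \<nu>)"
    by (rule prod_meas[OF bp_sets[OF mu] bp_sets[OF nu] b1 b2])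
  have fm: "fst \<in> measurable ?\<pi> \<mu>"
    using measurable_cong_sets[OF sets_density[of "\<mu> \<Otimes>\<^sub>M \<nu>"] refl] by simp
  show ?thesis
  proof (rule measure_eqI)
    show "sets (distr ?\<pi> \<mu> fst) = sets \<mu>" by simp
    fix A assume "A \<in> sets (distr ?\<pi> \<mu> fst)"
    then have A[measurable]: "A \<in> sets \<mu>" by simp
    have sub: "A \<subseteq> space \<mu>" using sets.sets_into_space[OF A] .
    have e1: "fst -` A \<inter> space (\<mu> \<Otimes>\<^sub>M \<nu>) = A \<times> space \<nu>" using sub by (auto simp: space_pair_measure)
    have AS[measurable]: "A \<times> space \<nu> \<in> sets (\<mu> \<Otimes>\<^sub>M \<nu>)" by (rule pair_measureI[OF A sets.top])
    have "emeasure (distr ?\<pi> \<mu> fst) A = emeasure ?\<pi> (A \<times> space \<nu>)"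
      by (subst emeasure_distr[OF fm]) (simp_all add: e1)
    also have "\<dots> = (\<integral>\<^sup>+z. ennreal (exp ((\<phi> (fst z) + \<psi> (snd z) - c (fst z) (snd z))/\<epsilon>)) * indicator (A \<times> space \<nu>) z \<partial>(\<mu> \<Otimes>\<^sub>M \<nu>))"
      by (rule emeasure_density) measurable
    also have "\<dots> = (\<integral>\<^sup>+x. \<integral>\<^sup>+y. ennreal (exp ((\<phi> x + \<psi> y - c x y)/\<epsilon>)) * indicator (A \<times> space \<nu>) (x, y) \<partial>\<nu> \<partial>\<mu>)"
    proof (subst N.nn_integral_fst[symmetric])
      have e: "(\<lambda>z. ennreal (exp ((\<phi> (fst z) + \<psi> (snd z) - c (fst z) (snd z))/\<epsilon>))) \<in> borel_measurable (\<mu> \<Otimes>\<^sub>M \<nu>)"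
        using gm by (rule measurable_compose) simp
      show "(\<lambda>z. ennreal (exp ((\<phi> (fst z) + \<psi> (snd z) - c (fst z) (snd z))/\<epsilon>)) * indicator (A \<times> space \<nu>) z) \<in> borel_measurable (\<mu> \<Otimes>\<^sub>M \<nu>)"
        using e by (intro borel_measurable_times_ennreal) simp_all
    qed simp
    also have "\<dots> = (\<integral>\<^sup>+x. indicator A x \<partial>\<mu>)"
    proof (rule nn_integral_cong)
      fix x assume x: "x \<in> space \<mu>"
      have "(\<integral>\<^sup>+y. ennreal (exp ((\<phi> x + \<psi> y - c x y)/\<epsilon>)) * indicator (A \<times> space \<nu>) (x, y) \<partial>\<nu>)
          = (\<integral>\<^sup>+y. ennreal (exp ((\<phi> x + \<psi> y - c x y)/\<epsilon>)) * indicator A x \<partial>\<nu>)"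
        by (rule nn_integral_cong) (auto simp: indicator_def)
      also have "\<dots> = (\<integral>\<^sup>+y. ennreal (exp ((\<phi> x + \<psi> y - c x y)/\<epsilon>)) \<partial>\<nu>) * indicator A x"
        by (rule nn_integral_multc) (use inner_int[OF b1 b2, of x] in auto)
      also have "(\<integral>\<^sup>+y. ennreal (exp ((\<phi> x + \<psi> y - c x y)/\<epsilon>)) \<partial>\<nu>) = ennreal (\<integral>y. exp ((\<phi> x + \<psi> y - c x y)/\<epsilon>) \<partial>\<nu>)"
        by (rule nn_integral_eq_integral[OF inner_int[OF b1 b2]]) simp
      finally show "(\<integral>\<^sup>+y. ennreal (exp ((\<phi> x + \<psi> y - c x y)/\<epsilon>)) * indicator (A \<times> space \<nu>) (x, y) \<partial>\<nu>) = indicator A x"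
        using inner[of x] by simp
    qed
    also have "\<dots> = emeasure \<mu> A" by simp
    finally show "emeasure (distr ?\<pi> \<mu> fst) A = emeasure \<mu> A" .
  qed
qed


lemma inner_int2:
  assumes b1: "bmf \<phi> l1 h1" and b2: "bmf \<psi> l2 h2"
  shows "integrable \<mu> (\<lambda>x. exp ((\<phi> x + \<psi> y - c x y)/\<epsilon>))"
proof -
  have [measurable]: "\<phi> \<in> borel_measurable borel" using b1 by (simp add: bmf_def)
  note c_meas1[measurable]
  show ?thesis
  proof (rule K.int_exp[OF mu, where B="(h1 + h2 + 1)/\<epsilon>"])
    show "(\<lambda>x. (\<phi> x + \<psi> y - c x y)/\<epsilon>) \<in> borel_measurable borel" by measurable
    fix x
    have "\<phi> x \<le> h1" "\<psi> y \<le> h2" using b1 b2 by (auto simp: bmf_def)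
    then have "\<phi> x + \<psi> y - c x y \<le> h1 + h2 + 1" using cb[of x y] by (auto simp: abs_le_iff)
    then show "(\<phi> x + \<psi> y - c x y)/\<epsilon> \<le> (h1 + h2 + 1)/\<epsilon>" using eps by (simp add: divide_right_mono)
  qed
qed

lemma marg2:
  assumes b1: "bmf \<phi> l1 h1" and b2: "bmf \<psi> l2 h2"
    and inner: "\<And>y. (\<integral>x. exp ((\<phi> x + \<psi> y - c x y)/\<epsilon>) \<partial>\<mu>) = 1"
  shows "distr (density (\<mu> \<Otimes>\<^sub>M \<nu>) (\<lambda>z. ennreal (exp ((\<phi> (fst z) + \<psi> (snd z) - c (fst z) (snd z))/\<epsilon>)))) \<nu> snd = \<nu>"
    (is "distr ?\<pi> \<nu> snd = \<nu>")
proof -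
  interpret M: prob_space \<mu> using mu by (rule bp_prob)
  interpret N: prob_space \<nu> using nu by (rule bp_prob)
  interpret P: pair_prob_space \<mu> \<nu> ..
  have gm[measurable]: "(\<lambda>z. exp ((\<phi> (fst z) + \<psi> (snd z) - c (fst z) (snd z))/\<epsilon>)) \<in> borel_measurable (\<mu> \<Otimes>\<^sub>M \<nu>)"
    by (rule prod_meas[OF bp_sets[OF mu] bp_sets[OF nu] b1 b2])
  have fm: "snd \<in> measurable ?\<pi> \<nu>"
    using measurable_cong_sets[OF sets_density[of "\<mu> \<Otimes>\<^sub>M \<nu>"] refl] by simp
  show ?thesis
  proof (rule measure_eqI)
    show "sets (distr ?\<pi> \<nu> snd) = sets \<nu>" by simp
    fix A assume "A \<in> sets (distr ?\<pi> \<nu> snd)"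
    then have A[measurable]: "A \<in> sets \<nu>" by simp
    have sub: "A \<subseteq> space \<nu>" using sets.sets_into_space[OF A] .
    have e1: "snd -` A \<inter> space (\<mu> \<Otimes>\<^sub>M \<nu>) = space \<mu> \<times> A" using sub by (auto simp: space_pair_measure)
    have AS[measurable]: "space \<mu> \<times> A \<in> sets (\<mu> \<Otimes>\<^sub>M \<nu>)" by (rule pair_measureI[OF sets.top A])
    have "emeasure (distr ?\<pi> \<nu> snd) A = emeasure ?\<pi> (space \<mu> \<times> A)"
      by (subst emeasure_distr[OF fm]) (simp_all add: e1)
    also have "\<dots> = (\<integral>\<^sup>+z. ennreal (exp ((\<phi> (fst z) + \<psi> (snd z) - c (fst z) (snd z))/\<epsilon>)) * indicator (space \<mu> \<times> A) z \<partial>(\<mu> \<Otimes>\<^sub>M \<nu>))"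
      by (rule emeasure_density) measurable
    also have "\<dots> = (\<integral>\<^sup>+y. \<integral>\<^sup>+x. ennreal (exp ((\<phi> x + \<psi> y - c x y)/\<epsilon>)) * indicator (space \<mu> \<times> A) (x, y) \<partial>\<mu> \<partial>\<nu>)"
    proof (subst P.nn_integral_snd[symmetric])
      have e: "(\<lambda>z. ennreal (exp ((\<phi> (fst z) + \<psi> (snd z) - c (fst z) (snd z))/\<epsilon>))) \<in> borel_measurable (\<mu> \<Otimes>\<^sub>M \<nu>)"
        using gm by (rule measurable_compose) simp
      show "(\<lambda>z. ennreal (exp ((\<phi> (fst z) + \<psi> (snd z) - c (fst z) (snd z))/\<epsilon>)) * indicator (space \<mu> \<times> A) z) \<in> borel_measurable (\<mu> \<Otimes>\<^sub>M \<nu>)"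
        using e by (intro borel_measurable_times_ennreal) simp_all
    qed simp
    also have "\<dots> = (\<integral>\<^sup>+y. indicator A y \<partial>\<nu>)"
    proof (rule nn_integral_cong)
      fix y assume y: "y \<in> space \<nu>"
      have "(\<integral>\<^sup>+x. ennreal (exp ((\<phi> x + \<psi> y - c x y)/\<epsilon>)) * indicator (space \<mu> \<times> A) (x, y) \<partial>\<mu>)
          = (\<integral>\<^sup>+x. ennreal (exp ((\<phi> x + \<psi> y - c x y)/\<epsilon>)) * indicator A y \<partial>\<mu>)"
        by (rule nn_integral_cong) (auto simp: indicator_def)
      also have "\<dots> = (\<integral>\<^sup>+x. ennreal (exp ((\<phi> x + \<psi> y - c x y)/\<epsilon>)) \<partial>\<mu>) * indicator A y"
        by (rule nn_integral_multc) (use inner_int2[OF b1 b2, of y] in auto)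
      also have "(\<integral>\<^sup>+x. ennreal (exp ((\<phi> x + \<psi> y - c x y)/\<epsilon>)) \<partial>\<mu>) = ennreal (\<integral>x. exp ((\<phi> x + \<psi> y - c x y)/\<epsilon>) \<partial>\<mu>)"
        by (rule nn_integral_eq_integral[OF inner_int2[OF b1 b2]]) simp
      finally show "(\<integral>\<^sup>+x. ennreal (exp ((\<phi> x + \<psi> y - c x y)/\<epsilon>)) * indicator (space \<mu> \<times> A) (x, y) \<partial>\<mu>) = indicator A y"
        using inner[of y] by simp
    qed
    also have "\<dots> = emeasure \<nu> A" by simp
    finally show "emeasure (distr ?\<pi> \<nu> snd) A = emeasure \<nu> A" .
  qed
qed


lemma OT_upper:
  assumes b1: "bmf \<phi> l1 h1" and b2: "bmf \<psi> l2 h2"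
    and r1: "\<And>x. \<phi> x = ctransX c \<epsilon> \<nu> \<psi> x" and r2: "\<And>y. \<psi> y = ctransY c \<epsilon> \<mu> \<phi> y"
  shows "OT c \<epsilon> \<mu> \<nu> \<le> ereal ((\<integral>x. \<phi> x \<partial>\<mu>) + (\<integral>y. \<psi> y \<partial>\<nu>))"
proof -
  interpret M: prob_space \<mu> using mu by (rule bp_prob)
  interpret N: prob_space \<nu> using nu by (rule bp_prob)
  interpret P: pair_prob_space \<mu> \<nu> ..
  define h where "h z = (\<phi> (fst z) + \<psi> (snd z) - c (fst z) (snd z))/\<epsilon>" for z
  define \<pi> where "\<pi> = density (\<mu> \<Otimes>\<^sub>M \<nu>) (\<lambda>z. ennreal (exp (h z)))"
  have inner1: "(\<integral>y. exp ((\<phi> x + \<psi> y - c x y)/\<epsilon>) \<partial>\<nu>) = 1" for x by (rule inner_one[OF nu b2 r1])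
  have inner2: "(\<integral>x. exp ((\<phi> x + \<psi> y - c x y)/\<epsilon>) \<partial>\<mu>) = 1" for y
  proof -
    have r2': "\<psi> y = ctransX (\<lambda>y x. c x y) \<epsilon> \<mu> \<phi> y" using r2[of y] unfolding ctransY_swap .
    show ?thesis using K.inner_one[where \<nu>=\<mu> and \<psi>=\<phi> and \<phi>=\<psi> and x=y, OF mu b1 r2'] by (simp add: add.commute)
  qed
  have d1: "distr \<pi> \<mu> fst = \<mu>" unfolding \<pi>_def h_def by (rule marg1[OF b1 b2 inner1])
  have d2: "distr \<pi> \<nu> snd = \<nu>" unfolding \<pi>_def h_def by (rule marg2[OF b1 b2 inner2])
  have s\<pi>: "sets \<pi> = sets (\<mu> \<Otimes>\<^sub>M \<nu>)" unfolding \<pi>_def by simp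
  have sbb: "sets (\<mu> \<Otimes>\<^sub>M \<nu>) = sets (borel \<Otimes>\<^sub>M borel)"
    by (rule sets_pair_measure_cong[OF bp_sets[OF mu] bp_sets[OF nu]])
  have e\<pi>: "borel_measurable \<pi> = borel_measurable (borel \<Otimes>\<^sub>M borel)"
    by (rule measurable_cong_sets) (use s\<pi> sbb in auto)
  have eP: "borel_measurable (\<mu> \<Otimes>\<^sub>M \<nu>) = borel_measurable (borel \<Otimes>\<^sub>M borel)"
    by (rule measurable_cong_sets) (use sbb in auto)
  have fm: "fst \<in> measurable \<pi> \<mu>" by (subst measurable_cong_sets[OF s\<pi> refl]) simp
  have sm: "snd \<in> measurable \<pi> \<nu>" by (subst measurable_cong_sets[OF s\<pi> refl]) simp
  have p\<pi>: "prob_space \<pi>" by (rule prob_space_distrD[OF fm]) (simp add: d1 M.prob_space_axioms)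
  interpret Pi: prob_space \<pi> by (rule p\<pi>)
  have coup: "\<pi> \<in> couplings \<mu> \<nu>" unfolding couplings_def using p\<pi> s\<pi> d1 d2 by simp
  have [measurable]: "\<phi> \<in> borel_measurable borel" "\<psi> \<in> borel_measurable borel" using b1 b2 by (auto simp: bmf_def)
  have [measurable]: "(\<lambda>z. c (fst z) (snd z)) \<in> borel_measurable (borel \<Otimes>\<^sub>M borel)" by (rule cm)
  have hmB: "h \<in> borel_measurable (borel \<Otimes>\<^sub>M borel)" unfolding h_def by measurable
  have int\<pi>: "integrable \<pi> f" if "f \<in> borel_measurable (borel \<Otimes>\<^sub>M borel)" "\<And>z. \<bar>f z\<bar> \<le> B" for f :: "_ \<Rightarrow> real" and B
    by (rule Pi.integrable_const_bound[where B=B]) (use that e\<pi> in auto)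
  have hb: "\<bar>h z\<bar> \<le> (\<bar>l1\<bar> + \<bar>h1\<bar> + \<bar>l2\<bar> + \<bar>h2\<bar> + 1)/\<epsilon>" for z
  proof -
    have "l1 \<le> \<phi> (fst z)" "\<phi> (fst z) \<le> h1" "l2 \<le> \<psi> (snd z)" "\<psi> (snd z) \<le> h2" using b1 b2 by (auto simp: bmf_def)
    then have "\<bar>\<phi> (fst z) + \<psi> (snd z) - c (fst z) (snd z)\<bar> \<le> \<bar>l1\<bar> + \<bar>h1\<bar> + \<bar>l2\<bar> + \<bar>h2\<bar> + 1"
      using cb[of "fst z" "snd z"] by (auto simp: abs_le_iff)
    then show ?thesis unfolding h_def using eps by (simp add: divide_right_mono abs_divide)
  qed
  have ih: "integrable \<pi> h" by (rule int\<pi>[OF hmB hb])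
  have ic: "integrable \<pi> (\<lambda>z. c (fst z) (snd z))" by (rule int\<pi>[of _ 1]) (use cb in auto)
  have i\<phi>: "integrable \<pi> (\<lambda>z. \<phi> (fst z))" by (rule int\<pi>[of _ "\<bar>l1\<bar> + \<bar>h1\<bar>"]) (use bmf_abs[OF b1] in \<open>auto simp: bmf_def\<close>)
  have i\<psi>: "integrable \<pi> (\<lambda>z. \<psi> (snd z))" by (rule int\<pi>[of _ "\<bar>l2\<bar> + \<bar>h2\<bar>"]) (use bmf_abs[OF b2] in \<open>auto simp: bmf_def\<close>)
  have gmP: "(\<lambda>z. ennreal (exp (h z))) \<in> borel_measurable (\<mu> \<Otimes>\<^sub>M \<nu>)" unfolding eP using hmB by measurable
  have ac: "absolutely_continuous (\<mu> \<Otimes>\<^sub>M \<nu>) \<pi>" unfolding \<pi>_def by (rule absolutely_continuousI_density[OF gmP])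
  have RN: "AE z in \<mu> \<Otimes>\<^sub>M \<nu>. ennreal (exp (h z)) = RN_deriv (\<mu> \<Otimes>\<^sub>M \<nu>) \<pi> z"
    unfolding \<pi>_def by (rule P.RN_deriv_unique[OF gmP refl])
  have RN\<pi>: "AE z in \<pi>. ln (enn2real (RN_deriv (\<mu> \<Otimes>\<^sub>M \<nu>) \<pi> z)) = h z"
  proof -
    have "AE z in \<mu> \<Otimes>\<^sub>M \<nu>. 0 < ennreal (exp (h z)) \<longrightarrow> ln (enn2real (RN_deriv (\<mu> \<Otimes>\<^sub>M \<nu>) \<pi> z)) = h z"
      using RN by eventually_elim (metis enn2real_ennreal exp_ge_zero ln_exp)
    then show ?thesis unfolding \<pi>_def[of] by (subst AE_density[OF gmP]) (simp add: \<pi>_def[symmetric])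
  qed
  have lnm: "(\<lambda>z. ln (enn2real (RN_deriv (\<mu> \<Otimes>\<^sub>M \<nu>) \<pi> z))) \<in> borel_measurable \<pi>"
  proof -
    have "(\<lambda>z. ln (enn2real (RN_deriv (\<mu> \<Otimes>\<^sub>M \<nu>) \<pi> z))) \<in> borel_measurable (\<mu> \<Otimes>\<^sub>M \<nu>)" by measurable
    then show ?thesis unfolding e\<pi> eP .
  qed
  have hm\<pi>: "h \<in> borel_measurable \<pi>" using hmB unfolding e\<pi> .
  have il: "integrable \<pi> (\<lambda>z. ln (enn2real (RN_deriv (\<mu> \<Otimes>\<^sub>M \<nu>) \<pi> z)))"
    using integrable_cong_AE[OF lnm hm\<pi> RN\<pi>] ih by simp
  have KLe: "KL \<pi> (\<mu> \<Otimes>\<^sub>M \<nu>) = ereal (\<integral>z. h z \<partial>\<pi>)"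
    unfolding KL_def using s\<pi> ac il integral_cong_AE[OF lnm hm\<pi> RN\<pi>] by simp
  have "OT c \<epsilon> \<mu> \<nu> \<le> ereal (\<integral>z. c (fst z) (snd z) \<partial>\<pi>) + ereal \<epsilon> * KL \<pi> (\<mu> \<Otimes>\<^sub>M \<nu>)"
    unfolding OT_def by (rule INF_lower[OF coup])
  also have "\<dots> = ereal ((\<integral>z. c (fst z) (snd z) \<partial>\<pi>) + \<epsilon> * (\<integral>z. h z \<partial>\<pi>))" unfolding KLe by simp
  also have "(\<integral>z. c (fst z) (snd z) \<partial>\<pi>) + \<epsilon> * (\<integral>z. h z \<partial>\<pi>) = (\<integral>z. c (fst z) (snd z) + \<epsilon> * h z \<partial>\<pi>)"
    using ic ih by simp
  also have "\<dots> = (\<integral>z. \<phi> (fst z) + \<psi> (snd z) \<partial>\<pi>)"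
    by (rule Bochner_Integration.integral_cong) (use eps in \<open>auto simp: h_def\<close>)
  also have "\<dots> = (\<integral>z. \<phi> (fst z) \<partial>\<pi>) + (\<integral>z. \<psi> (snd z) \<partial>\<pi>)" using i\<phi> i\<psi> by simp
  also have "(\<integral>z. \<phi> (fst z) \<partial>\<pi>) = (\<integral>x. \<phi> x \<partial>\<mu>)"
  proof -
    have "\<phi> \<in> borel_measurable \<mu>" unfolding meas_transfer[OF bp_sets[OF mu]] using b1 by (simp add: bmf_def)
    from integral_distr[OF fm this] show ?thesis by (simp add: d1)
  qed
  also have "(\<integral>z. \<psi> (snd z) \<partial>\<pi>) = (\<integral>y. \<psi> y \<partial>\<nu>)"
  proof -
    have "\<psi> \<in> borel_measurable \<nu>" unfolding meas_transfer[OF bp_sets[OF nu]] using b2 by (simp add: bmf_def)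
    from integral_distr[OF sm this] show ?thesis by (simp add: d2)
  qed
  finally show ?thesis .
qed


lemma OT_lower:
  assumes b1: "bmf \<phi> l1 h1" and b2: "bmf \<psi> l2 h2"
    and tot: "(\<integral>z. exp ((\<phi> (fst z) + \<psi> (snd z) - c (fst z) (snd z))/\<epsilon>) \<partial>(\<mu> \<Otimes>\<^sub>M \<nu>)) \<le> 1"
  shows "ereal ((\<integral>x. \<phi> x \<partial>\<mu>) + (\<integral>y. \<psi> y \<partial>\<nu>)) \<le> OT c \<epsilon> \<mu> \<nu>"
  unfolding OT_def
proof (rule INF_greatest)
  interpret M: prob_space \<mu> using mu by (rule bp_prob)
  interpret N: prob_space \<nu> using nu by (rule bp_prob)
  interpret P: pair_prob_space \<mu> \<nu> ..
  define h where "h z = (\<phi> (fst z) + \<psi> (snd z) - c (fst z) (snd z))/\<epsilon>" for z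
  fix \<pi> assume coup: "\<pi> \<in> couplings \<mu> \<nu>"
  have p\<pi>: "prob_space \<pi>" and s\<pi>: "sets \<pi> = sets (\<mu> \<Otimes>\<^sub>M \<nu>)" and d1: "distr \<pi> \<mu> fst = \<mu>" and d2: "distr \<pi> \<nu> snd = \<nu>"
    using coup unfolding couplings_def by auto
  interpret Pi: prob_space \<pi> by (rule p\<pi>)
  have sbb: "sets (\<mu> \<Otimes>\<^sub>M \<nu>) = sets (borel \<Otimes>\<^sub>M borel)"
    by (rule sets_pair_measure_cong[OF bp_sets[OF mu] bp_sets[OF nu]])
  have e\<pi>: "borel_measurable \<pi> = borel_measurable (borel \<Otimes>\<^sub>M borel)"
    by (rule measurable_cong_sets) (use s\<pi> sbb in auto)
  have eP: "borel_measurable (\<mu> \<Otimes>\<^sub>M \<nu>) = borel_measurable (borel \<Otimes>\<^sub>M borel)"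
    by (rule measurable_cong_sets) (use sbb in auto)
  have fm: "fst \<in> measurable \<pi> \<mu>" by (subst measurable_cong_sets[OF s\<pi> refl]) simp
  have sm: "snd \<in> measurable \<pi> \<nu>" by (subst measurable_cong_sets[OF s\<pi> refl]) simp
  have [measurable]: "\<phi> \<in> borel_measurable borel" "\<psi> \<in> borel_measurable borel" using b1 b2 by (auto simp: bmf_def)
  have [measurable]: "(\<lambda>z. c (fst z) (snd z)) \<in> borel_measurable (borel \<Otimes>\<^sub>M borel)" by (rule cm)
  have hmB[measurable]: "h \<in> borel_measurable (borel \<Otimes>\<^sub>M borel)" unfolding h_def by measurable
  have int\<pi>: "integrable \<pi> f" if "f \<in> borel_measurable (borel \<Otimes>\<^sub>M borel)" "\<And>z. \<bar>f z\<bar> \<le> B" for f :: "_ \<Rightarrow> real" and B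
    by (rule Pi.integrable_const_bound[where B=B]) (use that e\<pi> in auto)
  have hb: "\<bar>h z\<bar> \<le> (\<bar>l1\<bar> + \<bar>h1\<bar> + \<bar>l2\<bar> + \<bar>h2\<bar> + 1)/\<epsilon>" for z
  proof -
    have "l1 \<le> \<phi> (fst z)" "\<phi> (fst z) \<le> h1" "l2 \<le> \<psi> (snd z)" "\<psi> (snd z) \<le> h2" using b1 b2 by (auto simp: bmf_def)
    then have "\<bar>\<phi> (fst z) + \<psi> (snd z) - c (fst z) (snd z)\<bar> \<le> \<bar>l1\<bar> + \<bar>h1\<bar> + \<bar>l2\<bar> + \<bar>h2\<bar> + 1"
      using cb[of "fst z" "snd z"] by (auto simp: abs_le_iff)
    then show ?thesis unfolding h_def using eps by (simp add: divide_right_mono abs_divide)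
  qed
  have ih: "integrable \<pi> h" by (rule int\<pi>[OF hmB hb])
  have ic: "integrable \<pi> (\<lambda>z. c (fst z) (snd z))" by (rule int\<pi>[of _ 1]) (use cb in auto)
  have i\<phi>: "integrable \<pi> (\<lambda>z. \<phi> (fst z))" by (rule int\<pi>[of _ "\<bar>l1\<bar> + \<bar>h1\<bar>"]) (use bmf_abs[OF b1] in \<open>auto simp: bmf_def\<close>)
  have i\<psi>: "integrable \<pi> (\<lambda>z. \<psi> (snd z))" by (rule int\<pi>[of _ "\<bar>l2\<bar> + \<bar>h2\<bar>"]) (use bmf_abs[OF b2] in \<open>auto simp: bmf_def\<close>)
  have key: "(\<integral>z. c (fst z) (snd z) \<partial>\<pi>) + \<epsilon> * (\<integral>z. h z \<partial>\<pi>) = (\<integral>x. \<phi> x \<partial>\<mu>) + (\<integral>y. \<psi> y \<partial>\<nu>)"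
  proof -
    have "(\<integral>z. c (fst z) (snd z) \<partial>\<pi>) + \<epsilon> * (\<integral>z. h z \<partial>\<pi>) = (\<integral>z. c (fst z) (snd z) + \<epsilon> * h z \<partial>\<pi>)"
      using ic ih by simp
    also have "\<dots> = (\<integral>z. \<phi> (fst z) + \<psi> (snd z) \<partial>\<pi>)"
      by (rule Bochner_Integration.integral_cong) (use eps in \<open>auto simp: h_def\<close>)
    also have "\<dots> = (\<integral>z. \<phi> (fst z) \<partial>\<pi>) + (\<integral>z. \<psi> (snd z) \<partial>\<pi>)" using i\<phi> i\<psi> by simp
    also have "(\<integral>z. \<phi> (fst z) \<partial>\<pi>) = (\<integral>x. \<phi> x \<partial>\<mu>)"
    proof -
      have "\<phi> \<in> borel_measurable \<mu>" unfolding meas_transfer[OF bp_sets[OF mu]] using b1 by (simp add: bmf_def)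
      from integral_distr[OF fm this] show ?thesis by (simp add: d1)
    qed
    also have "(\<integral>z. \<psi> (snd z) \<partial>\<pi>) = (\<integral>y. \<psi> y \<partial>\<nu>)"
    proof -
      have "\<psi> \<in> borel_measurable \<nu>" unfolding meas_transfer[OF bp_sets[OF nu]] using b2 by (simp add: bmf_def)
      from integral_distr[OF sm this] show ?thesis by (simp add: d2)
    qed
    finally show ?thesis .
  qed
  show "ereal ((\<integral>x. \<phi> x \<partial>\<mu>) + (\<integral>y. \<psi> y \<partial>\<nu>)) \<le> ereal (\<integral>z. c (fst z) (snd z) \<partial>\<pi>) + ereal \<epsilon> * KL \<pi> (\<mu> \<Otimes>\<^sub>M \<nu>)"
  proof (cases "KL \<pi> (\<mu> \<Otimes>\<^sub>M \<nu>) = \<infinity>")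
    case True then show ?thesis using eps by simp
  next
    case False
    define f where "f = RN_deriv (\<mu> \<Otimes>\<^sub>M \<nu>) \<pi>"
    define l where "l z = ln (enn2real (f z))" for z
    have ac: "absolutely_continuous (\<mu> \<Otimes>\<^sub>M \<nu>) \<pi>" and il: "integrable \<pi> l"
      and KLe: "KL \<pi> (\<mu> \<Otimes>\<^sub>M \<nu>) = ereal (\<integral>z. l z \<partial>\<pi>)"
      using False unfolding KL_def f_def l_def by (auto split: if_splits)
    have dens: "density (\<mu> \<Otimes>\<^sub>M \<nu>) f = \<pi>" unfolding f_def by (rule P.density_RN_deriv[OF ac s\<pi>])
    have fm'[measurable]: "f \<in> borel_measurable (\<mu> \<Otimes>\<^sub>M \<nu>)" unfolding f_def by simp
    have fin: "AE z in \<mu> \<Otimes>\<^sub>M \<nu>. f z \<noteq> \<infinity>" unfolding f_def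
      by (rule P.RN_deriv_finite[OF _ ac s\<pi>]) (rule Pi.sigma_finite_measure_axioms)
    define q where "q z = exp (h z) / enn2real (f z)" for z
    have qmP: "q \<in> borel_measurable (\<mu> \<Otimes>\<^sub>M \<nu>)" unfolding q_def using hmB unfolding eP[symmetric] by measurable
    have qm: "q \<in> borel_measurable \<pi>" using qmP unfolding eP e\<pi> .
    have qnn: "0 \<le> q z" for z unfolding q_def by simp
    have pw: "f z * ennreal (q z) \<le> ennreal (exp (h z))" for z
    proof (cases "f z = \<infinity>")
      case True then show ?thesis by (simp add: q_def)
    next
      case F: False
      show ?thesis
      proof (cases "f z = 0")
        case True then show ?thesis by simp
      next
        case False
        then have fp: "0 < enn2real (f z)" using F by (simp add: enn2real_positive_iff less_top zero_less_iff_neq_zero)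
        have "f z = ennreal (enn2real (f z))" using F by (simp add: ennreal_enn2real_if)
        then have "f z * ennreal (q z) = ennreal (enn2real (f z) * q z)" by (metis ennreal_mult' enn2real_nonneg)
        also have "enn2real (f z) * q z = exp (h z)" unfolding q_def using fp by simp
        finally show ?thesis by simp
      qed
    qed
    have emP: "(\<lambda>z. ennreal (exp (h z))) \<in> borel_measurable (\<mu> \<Otimes>\<^sub>M \<nu>)" unfolding eP by measurable
    have ie: "integrable (\<mu> \<Otimes>\<^sub>M \<nu>) (\<lambda>z. exp (h z))"
      using prod_int[OF mu nu b1 b2] unfolding h_def .
    have "(\<integral>\<^sup>+z. ennreal (q z) \<partial>\<pi>) = (\<integral>\<^sup>+z. f z * ennreal (q z) \<partial>(\<mu> \<Otimes>\<^sub>M \<nu>))"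
      unfolding dens[symmetric] by (rule nn_integral_density[OF fm']) (use qmP in measurable)
    also have "\<dots> \<le> (\<integral>\<^sup>+z. ennreal (exp (h z)) \<partial>(\<mu> \<Otimes>\<^sub>M \<nu>))" by (rule nn_integral_mono) (rule pw)
    also have "\<dots> = ennreal (\<integral>z. exp (h z) \<partial>(\<mu> \<Otimes>\<^sub>M \<nu>))" by (rule nn_integral_eq_integral[OF ie]) simp
    also have "\<dots> \<le> 1" using tot unfolding h_def by simp
    finally have nq: "(\<integral>\<^sup>+z. ennreal (q z) \<partial>\<pi>) \<le> 1" .
    have iq: "integrable \<pi> q" by (rule integrableI_nonneg[OF qm]) (use qnn nq in \<open>auto intro: le_less_trans\<close>)
    have Iq: "(\<integral>z. q z \<partial>\<pi>) \<le> 1"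
    proof -
      have "(\<integral>z. q z \<partial>\<pi>) = enn2real (\<integral>\<^sup>+z. ennreal (q z) \<partial>\<pi>)" by (rule integral_eq_nn_integral[OF qm]) (simp add: qnn)
      also have "\<dots> \<le> enn2real 1" using nq by (intro enn2real_mono) auto
      finally show ?thesis by simp
    qed
    have pos: "AE z in \<pi>. 0 < enn2real (f z)"
    proof -
      have "AE z in \<mu> \<Otimes>\<^sub>M \<nu>. 0 < f z \<longrightarrow> 0 < enn2real (f z)"
        using fin by eventually_elim (simp add: enn2real_positive_iff less_top)
      then show ?thesis unfolding dens[symmetric] by (subst AE_density[OF fm'])
    qed
    have pwl: "AE z in \<pi>. h z + 1 - q z \<le> l z"
      using pos
    proof eventually_elim
      case (elim z)
      have tp: "0 < exp (h z) / enn2real (f z)" using elim by simp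
      have "ln (exp (h z) / enn2real (f z)) \<le> exp (h z) / enn2real (f z) - 1" by (rule ln_le_minus_one[OF tp])
      moreover have "ln (exp (h z) / enn2real (f z)) = h z - l z" unfolding l_def using elim by (simp add: ln_div)
      ultimately show ?case unfolding q_def by simp
    qed
    have "(\<integral>z. h z + 1 - q z \<partial>\<pi>) \<le> (\<integral>z. l z \<partial>\<pi>)"
      by (rule integral_mono_AE[OF _ il pwl]) (use ih iq in simp)
    moreover have "(\<integral>z. h z + 1 - q z \<partial>\<pi>) = (\<integral>z. h z \<partial>\<pi>) + 1 - (\<integral>z. q z \<partial>\<pi>)"
      using ih iq by (simp add: Pi.prob_space)
    ultimately have hl: "(\<integral>z. h z \<partial>\<pi>) \<le> (\<integral>z. l z \<partial>\<pi>)" using Iq by linarith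
    have "(\<integral>x. \<phi> x \<partial>\<mu>) + (\<integral>y. \<psi> y \<partial>\<nu>) \<le> (\<integral>z. c (fst z) (snd z) \<partial>\<pi>) + \<epsilon> * (\<integral>z. l z \<partial>\<pi>)"
      unfolding key[symmetric] using hl eps by simp
    then show ?thesis unfolding KLe by simp
  qed
qed


lemma OT_lower_X:
  assumes b1: "bmf \<phi> l1 h1" and b2: "bmf \<psi> l2 h2" and r1: "\<And>x. \<phi> x = ctransX c \<epsilon> \<nu> \<psi> x"
  shows "ereal ((\<integral>x. \<phi> x \<partial>\<mu>) + (\<integral>y. \<psi> y \<partial>\<nu>)) \<le> OT c \<epsilon> \<mu> \<nu>"
proof (rule OT_lower[OF b1 b2])
  interpret M: prob_space \<mu> using mu by (rule bp_prob)
  interpret N: prob_space \<nu> using nu by (rule bp_prob)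
  interpret P: pair_prob_space \<mu> \<nu> ..
  have in1: "(\<integral>y. exp ((\<phi> x + \<psi> y - c x y)/\<epsilon>) \<partial>\<nu>) = 1" for x by (rule inner_one[OF nu b2 r1])
  have "(\<integral>z. exp ((\<phi> (fst z) + \<psi> (snd z) - c (fst z) (snd z))/\<epsilon>) \<partial>(\<mu> \<Otimes>\<^sub>M \<nu>))
      = (\<integral>x. (\<integral>y. exp ((\<phi> x + \<psi> y - c x y)/\<epsilon>) \<partial>\<nu>) \<partial>\<mu>)"
    using P.integral_fst'[OF prod_int[OF mu nu b1 b2]] by simp
  also have "(\<integral>x. (\<integral>y. exp ((\<phi> x + \<psi> y - c x y)/\<epsilon>) \<partial>\<nu>) \<partial>\<mu>) = 1" using in1 by (simp add: M.prob_space)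
  finally show "(\<integral>z. exp ((\<phi> (fst z) + \<psi> (snd z) - c (fst z) (snd z))/\<epsilon>) \<partial>(\<mu> \<Otimes>\<^sub>M \<nu>)) \<le> 1" by simp
qed

lemma OT_lower_Y:
  assumes b1: "bmf \<phi> l1 h1" and b2: "bmf \<psi> l2 h2" and r2: "\<And>y. \<psi> y = ctransY c \<epsilon> \<mu> \<phi> y"
  shows "ereal ((\<integral>x. \<phi> x \<partial>\<mu>) + (\<integral>y. \<psi> y \<partial>\<nu>)) \<le> OT c \<epsilon> \<mu> \<nu>"
proof (rule OT_lower[OF b1 b2])
  interpret M: prob_space \<mu> using mu by (rule bp_prob)
  interpret N: prob_space \<nu> using nu by (rule bp_prob)
  interpret P: pair_prob_space \<mu> \<nu> ..
  have inner2: "(\<integral>x. exp ((\<phi> x + \<psi> y - c x y)/\<epsilon>) \<partial>\<mu>) = 1" for y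
  proof -
    have r2': "\<psi> y = ctransX (\<lambda>y x. c x y) \<epsilon> \<mu> \<phi> y" using r2[of y] unfolding ctransY_swap .
    show ?thesis using K.inner_one[where \<nu>=\<mu> and \<psi>=\<phi> and \<phi>=\<psi> and x=y, OF mu b1 r2'] by (simp add: add.commute)
  qed
  have "(\<integral>z. exp ((\<phi> (fst z) + \<psi> (snd z) - c (fst z) (snd z))/\<epsilon>) \<partial>(\<mu> \<Otimes>\<^sub>M \<nu>))
      = (\<integral>x. (\<integral>y. exp ((\<phi> x + \<psi> y - c x y)/\<epsilon>) \<partial>\<nu>) \<partial>\<mu>)"
    using P.integral_fst'[OF prod_int[OF mu nu b1 b2]] by simp
  also have "\<dots> = (\<integral>y. (\<integral>x. exp ((\<phi> x + \<psi> y - c x y)/\<epsilon>) \<partial>\<mu>) \<partial>\<nu>)" by (rule fub[OF mu nu b1 b2])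
  also have "\<dots> = 1" using inner2 by (simp add: N.prob_space)
  finally show "(\<integral>z. exp ((\<phi> (fst z) + \<psi> (snd z) - c (fst z) (snd z))/\<epsilon>) \<partial>(\<mu> \<Otimes>\<^sub>M \<nu>)) \<le> 1" by simp
qed

lemma OT_pot:
  "\<exists>\<phi> \<psi>. bmf \<phi> (-3/2) (3/2) \<and> bmf \<psi> (-3/2) (3/2) \<and> (\<forall>x. \<phi> x = ctransX c \<epsilon> \<nu> \<psi> x)
      \<and> (\<forall>y. \<psi> y = ctransY c \<epsilon> \<mu> \<phi> y) \<and> OT c \<epsilon> \<mu> \<nu> = ereal ((\<integral>x. \<phi> x \<partial>\<mu>) + (\<integral>y. \<psi> y \<partial>\<nu>))"
proof -
  obtain \<phi> \<psi> where b1: "bmf \<phi> (-3/2) (3/2)" and b2: "bmf \<psi> (-3/2) (3/2)"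
    and r1: "\<And>x. \<phi> x = ctransX c \<epsilon> \<nu> \<psi> x" and r2: "\<And>y. \<psi> y = ctransY c \<epsilon> \<mu> \<phi> y"
    using potentials by blast
  have "OT c \<epsilon> \<mu> \<nu> = ereal ((\<integral>x. \<phi> x \<partial>\<mu>) + (\<integral>y. \<psi> y \<partial>\<nu>))"
    using OT_upper[OF b1 b2 r1 r2] OT_lower_X[OF b1 b2 r1] by (rule antisym)
  then show ?thesis using b1 b2 r1 r2 by blast
qed

end

lemma Fce_mem:
  assumes xi: "borel_prob \<xi>" and b\<psi>: "bmf \<psi> (-3/2) (3/2)" and b\<phi>: "bmf \<phi> (-3/2) (3/2)"
    and r: "\<And>x. \<phi> x = ctransX c \<epsilon> \<xi> \<psi> x"
  shows "\<phi> \<in> Fce c \<epsilon>"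
  unfolding Fce_def
proof (intro CollectI exI conjI allI)
  show "borel_prob \<xi>" by fact
  show "\<psi> \<in> borel_measurable borel" using b\<psi> by (simp add: bmf_def)
  show "\<phi> = ctransX c \<epsilon> \<xi> \<psi>" using r by (simp add: fun_eq_iff)
  show "\<bar>\<phi> x\<bar> \<le> 3/2" for x
  proof -
    have "-3/2 \<le> \<phi> x" "\<phi> x \<le> 3/2" using b\<phi> by (auto simp: bmf_def)
    then show ?thesis by (simp add: abs_le_iff)
  qed
  show "\<bar>\<psi> y\<bar> \<le> 3/2" for y
  proof -
    have "-3/2 \<le> \<psi> y" "\<psi> y \<le> 3/2" using b\<psi> by (auto simp: bmf_def)
    then show ?thesis by (simp add: abs_le_iff)
  qed
qed


lemma ereal_le_2: "0 \<le> (x::ereal) \<Longrightarrow> x \<le> 2 * x"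
  by (cases x) auto

lemma main_loc:
  assumes mu: "borel_prob \<mu>" and mu': "borel_prob \<mu>'" and nu: "borel_prob \<nu>" and nu': "borel_prob \<nu>'"
  shows "\<bar>OT c \<epsilon> \<mu>' \<nu>' - OT c \<epsilon> \<mu> \<nu>\<bar>
    \<le> 2 * (SUP \<phi>\<in>Fce c \<epsilon>. ereal \<bar>(\<integral>x. \<phi> x \<partial>\<mu>') - (\<integral>x. \<phi> x \<partial>\<mu>)\<bar>)
     + 2 * (SUP \<phi>\<in>Fce c \<epsilon>. ereal \<bar>(\<integral>y. ctransY c \<epsilon> \<mu>' \<phi> y \<partial>\<nu>') - (\<integral>y. ctransY c \<epsilon> \<mu>' \<phi> y \<partial>\<nu>)\<bar>)"
proof -
  define S1 where "S1 = (SUP \<phi>\<in>Fce c \<epsilon>. ereal \<bar>(\<integral>x. \<phi> x \<partial>\<mu>') - (\<integral>x. \<phi> x \<partial>\<mu>)\<bar>)"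
  define S2 where "S2 = (SUP \<phi>\<in>Fce c \<epsilon>. ereal \<bar>(\<integral>y. ctransY c \<epsilon> \<mu>' \<phi> y \<partial>\<nu>') - (\<integral>y. ctransY c \<epsilon> \<mu>' \<phi> y \<partial>\<nu>)\<bar>)"
  obtain \<phi>1 \<psi>1 where b11: "bmf \<phi>1 (-3/2) (3/2)" and b12: "bmf \<psi>1 (-3/2) (3/2)"
    and r11: "\<And>x. \<phi>1 x = ctransX c \<epsilon> \<nu> \<psi>1 x" and r12: "\<And>y. \<psi>1 y = ctransY c \<epsilon> \<mu>' \<phi>1 y"
    and e1: "OT c \<epsilon> \<mu>' \<nu> = ereal ((\<integral>x. \<phi>1 x \<partial>\<mu>') + (\<integral>y. \<psi>1 y \<partial>\<nu>))"
    using OT_pot[OF mu' nu] by blast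
  obtain \<phi>2 \<psi>2 where b21: "bmf \<phi>2 (-3/2) (3/2)" and b22: "bmf \<psi>2 (-3/2) (3/2)"
    and r21: "\<And>x. \<phi>2 x = ctransX c \<epsilon> \<nu> \<psi>2 x"
    and e2: "OT c \<epsilon> \<mu> \<nu> = ereal ((\<integral>x. \<phi>2 x \<partial>\<mu>) + (\<integral>y. \<psi>2 y \<partial>\<nu>))"
    using OT_pot[OF mu nu] by blast
  obtain \<phi>3 \<psi>3 where b31: "bmf \<phi>3 (-3/2) (3/2)" and b32: "bmf \<psi>3 (-3/2) (3/2)"
    and r31: "\<And>x. \<phi>3 x = ctransX c \<epsilon> \<nu>' \<psi>3 x" and r32: "\<And>y. \<psi>3 y = ctransY c \<epsilon> \<mu>' \<phi>3 y"
    and e3: "OT c \<epsilon> \<mu>' \<nu>' = ereal ((\<integral>x. \<phi>3 x \<partial>\<mu>') + (\<integral>y. \<psi>3 y \<partial>\<nu>'))"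
    using OT_pot[OF mu' nu'] by blast
  define a where "a = (\<integral>x. \<phi>3 x \<partial>\<mu>') + (\<integral>y. \<psi>3 y \<partial>\<nu>')"
  define b where "b = (\<integral>x. \<phi>1 x \<partial>\<mu>') + (\<integral>y. \<psi>1 y \<partial>\<nu>)"
  define cc where "cc = (\<integral>x. \<phi>2 x \<partial>\<mu>) + (\<integral>y. \<psi>2 y \<partial>\<nu>)"
  have l1: "(\<integral>x. \<phi>1 x \<partial>\<mu>) + (\<integral>y. \<psi>1 y \<partial>\<nu>) \<le> cc"
    using OT_lower_X[OF mu nu b11 b12 r11] e2 unfolding cc_def by simp
  have l2: "(\<integral>x. \<phi>2 x \<partial>\<mu>') + (\<integral>y. \<psi>2 y \<partial>\<nu>) \<le> b"
    using OT_lower_X[OF mu' nu b21 b22 r21] e1 unfolding b_def by simp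
  have l3: "(\<integral>x. \<phi>3 x \<partial>\<mu>') + (\<integral>y. \<psi>3 y \<partial>\<nu>) \<le> b"
    using OT_lower_Y[OF mu' nu b31 b32 r32] e1 unfolding b_def by simp
  have l4: "(\<integral>x. \<phi>1 x \<partial>\<mu>') + (\<integral>y. \<psi>1 y \<partial>\<nu>') \<le> a"
    using OT_lower_Y[OF mu' nu' b11 b12 r12] e3 unfolding a_def by simp
  have F1: "\<phi>1 \<in> Fce c \<epsilon>" by (rule Fce_mem[OF nu b12 b11 r11])
  have F2: "\<phi>2 \<in> Fce c \<epsilon>" by (rule Fce_mem[OF nu b22 b21 r21])
  have F3: "\<phi>3 \<in> Fce c \<epsilon>" by (rule Fce_mem[OF nu' b32 b31 r31])
  have f1: "ctransY c \<epsilon> \<mu>' \<phi>1 = \<psi>1" using r12 by (simp add: fun_eq_iff)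
  have f3: "ctransY c \<epsilon> \<mu>' \<phi>3 = \<psi>3" using r32 by (simp add: fun_eq_iff)
  have s1a: "ereal \<bar>(\<integral>x. \<phi>1 x \<partial>\<mu>') - (\<integral>x. \<phi>1 x \<partial>\<mu>)\<bar> \<le> S1" unfolding S1_def by (rule SUP_upper[OF F1])
  have s1b: "ereal \<bar>(\<integral>x. \<phi>2 x \<partial>\<mu>') - (\<integral>x. \<phi>2 x \<partial>\<mu>)\<bar> \<le> S1" unfolding S1_def by (rule SUP_upper[OF F2])
  have s2a: "ereal \<bar>(\<integral>y. \<psi>3 y \<partial>\<nu>') - (\<integral>y. \<psi>3 y \<partial>\<nu>)\<bar> \<le> S2" unfolding S2_def f3[symmetric] by (rule SUP_upper[OF F3])
  have s2b: "ereal \<bar>(\<integral>y. \<psi>1 y \<partial>\<nu>') - (\<integral>y. \<psi>1 y \<partial>\<nu>)\<bar> \<le> S2" unfolding S2_def f1[symmetric] by (rule SUP_upper[OF F1])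
  have t1: "ereal \<bar>b - cc\<bar> \<le> S1"
  proof (cases "cc \<le> b")
    case True
    then have "\<bar>b - cc\<bar> \<le> \<bar>(\<integral>x. \<phi>1 x \<partial>\<mu>') - (\<integral>x. \<phi>1 x \<partial>\<mu>)\<bar>" using l1 unfolding b_def by linarith
    then show ?thesis using s1a by (meson ereal_less_eq(3) order_trans)
  next
    case False
    then have "\<bar>b - cc\<bar> \<le> \<bar>(\<integral>x. \<phi>2 x \<partial>\<mu>') - (\<integral>x. \<phi>2 x \<partial>\<mu>)\<bar>" using l2 unfolding cc_def by linarith
    then show ?thesis using s1b by (meson ereal_less_eq(3) order_trans)
  qed
  have t2: "ereal \<bar>a - b\<bar> \<le> S2"
  proof (cases "b \<le> a")
    case True
    then have "\<bar>a - b\<bar> \<le> \<bar>(\<integral>y. \<psi>3 y \<partial>\<nu>') - (\<integral>y. \<psi>3 y \<partial>\<nu>)\<bar>" using l3 unfolding a_def by linarith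
    then show ?thesis using s2a by (meson ereal_less_eq(3) order_trans)
  next
    case False
    then have "\<bar>a - b\<bar> \<le> \<bar>(\<integral>y. \<psi>1 y \<partial>\<nu>') - (\<integral>y. \<psi>1 y \<partial>\<nu>)\<bar>" using l4 unfolding b_def by linarith
    then show ?thesis using s2b by (meson ereal_less_eq(3) order_trans)
  qed
  have S1p: "0 \<le> S1" using s1a by (meson abs_ge_zero ereal_less_eq(5) order_trans)
  have S2p: "0 \<le> S2" using s2a by (meson abs_ge_zero ereal_less_eq(5) order_trans)
  have "\<bar>OT c \<epsilon> \<mu>' \<nu>' - OT c \<epsilon> \<mu> \<nu>\<bar> = ereal \<bar>a - cc\<bar>" unfolding e3 e2 a_def cc_def by simp
  also have "\<dots> \<le> ereal \<bar>a - b\<bar> + ereal \<bar>b - cc\<bar>" by simp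
  also have "\<dots> \<le> S2 + S1" using t1 t2 by (rule add_mono[rotated])
  also have "\<dots> \<le> 2 * S1 + 2 * S2" using ereal_le_2[OF S1p] ereal_le_2[OF S2p] by (simp add: add.commute add_mono)
  finally show ?thesis unfolding S1_def S2_def .
qed

end

theorem mainTheorem2:
  fixes c :: "'a::polish_space \<Rightarrow> 'b::polish_space \<Rightarrow> real"
    and \<epsilon> :: real
    and \<mu> \<mu>' :: "'a measure" and \<nu> \<nu>' :: "'b measure"
  assumes c_meas: "(\<lambda>z. c (fst z) (snd z)) \<in> borel_measurable (borel \<Otimes>\<^sub>M borel)"
    and c_bdd: "\<And>x y. \<bar>c x y\<bar> \<le> 1"
    and eps: "\<epsilon> > 0"
    and mu: "borel_prob \<mu>" and mu': "borel_prob \<mu>'"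
    and nu: "borel_prob \<nu>" and nu': "borel_prob \<nu>'"
  shows "\<bar>OT c \<epsilon> \<mu>' \<nu>' - OT c \<epsilon> \<mu> \<nu>\<bar>
    \<le> 2 * (SUP \<phi>\<in>Fce c \<epsilon>. ereal \<bar>(\<integral>x. \<phi> x \<partial>\<mu>') - (\<integral>x. \<phi> x \<partial>\<mu>)\<bar>)
     + 2 * (SUP \<phi>\<in>Fce c \<epsilon>. ereal \<bar>(\<integral>y. ctransY c \<epsilon> \<mu>' \<phi> y \<partial>\<nu>') - (\<integral>y. ctransY c \<epsilon> \<mu>' \<phi> y \<partial>\<nu>)\<bar>)"
  proof -
  interpret kern c \<epsilon> using c_meas c_bdd eps by unfold_locales
  show ?thesis by (rule main_loc[OF mu mu' nu nu'])
qed

end
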